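(* Fix an integer $b\ge 1$. For each of the three families below, take the indicated weight sequences $(\varphi_k)_{k\ge0}$ and $(\psi_k)_{1\le k\le b-1}$, and consider the corresponding weighted family $\mathcal{T}$ of ordered increasing bucket trees with maximal bucket size $b$ (see context). Then: (A) For every ordered increasing bucket tree $T\in\mathcal{T}$ of size $n$ and every node $v\in T$, the probability under the random tree model that the new label $n+1$ is attracted by $v$, i.e. the ratio $$p_T(v)=\frac{\sum_{T':\,T\xrightarrow{v}T'} w(T')}{\sum_{T':\,T\to T'} w(T')},$$ equals the attraction probability $p(v)$ of the corresponding growth process (recalled in the context). Consequently the law of the random (unordered) tree of size $n$ produced by the growth process coincides with the law of the random unordered bucket increasing tree of size $n$ under the random tree model, for every $n\ge1$. (B) The weights, the exponential generating function $T(z)=\sum_{n\ge1}T_n z^n/n!$ and the total weights $T_n$ are: 1. Bucket recursive trees: $\varphi_k=\frac{(b-1)!\,b^k}{k!}$ ($k\ge0$), $\psi_k=(k-1)!$ ($1\le k\le b-1$), so $\varphi(t)=(b-1)!\,e^{bt}$; then $T(z)=\log\frac{1}{1-z}$ and $T_n=(n-1)!$. 2. $(b,d)$-ary increasing trees ($d\ge2$ an integer): $\varphi_k=(b-1)!(d-1)^{b-1}\binom{b-1+\frac1{d-1}}{b-1}\binom{b(d-1)+1}{k}$ ($k\ge0$), $\psi_k=(k-1)!(d-1)^{k-1}\binom{k-1+\frac1{d-1}}{k-1}$ ($1\le k\le b-1$), so $\varphi(t)=(b-1)!(d-1)^{b-1}\binom{b-1+\frac1{d-1}}{b-1}(1+t)^{b(d-1)+1}$;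 then $T(z)=(1-(d-1)z)^{-\frac1{d-1}}-1$ and $T_n=(n-1)!(d-1)^{n-1}\binom{n-1+\frac1{d-1}}{n-1}$. 3. $(b,\alpha)$-plane oriented recursive trees ($\alpha>0$ real): $\varphi_k=(b-1)!(\alpha+1)^{b-1}\binom{b-1-\frac1{\alpha+1}}{b-1}\binom{(\alpha+1)b-2+k}{k}$ ($k\ge0$), $\psi_k=(k-1)!(\alpha+1)^{k-1}\binom{k-1-\frac1{\alpha+1}}{k-1}$ ($1\le k\le b-1$), so $\varphi(t)=\frac{(b-1)!(\alpha+1)^{b-1}\binom{b-1-\frac1{\alpha+1}}{b-1}}{(1-t)^{(\alpha+1)b-1}}$; then $T(z)=1-(1-(\alpha+1)z)^{\frac1{\alpha+1}}$ and $T_n=(n-1)!(\alpha+1)^{n-1}\binom{n-1-\frac1{\alpha+1}}{n-1}$.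
   Context: Binomial coefficients with non-integer upper argument: $\binom{x}{k}=x(x-1)\cdots(x-k+1)/k!$. Ordered bucket trees: fix $b\ge1$. An ordered bucket tree is a rooted plane tree (children of each node are linearly ordered) whose nodes ("buckets") $v$ have a capacity $c(v)\in\{1,\dots,b\}$; $v$ is saturated if $c(v)=b$, and every node with at least one child must be saturated. Its size is $\sum_v c(v)$. An increasing labelling of a tree of size $n$ distributes the labels $1,\dots,n$ so that node $v$ receives $c(v)$ labels and every label of a node is smaller than all labels in its children. Given a sequence $(\varphi_k)_{k\ge0}$ of nonnegative numbers with $\varphi_0>0$ and nonnegative $\psi_1,\dots,\psi_{b-1}$, the weight of a tree is $w(T)=\prod_v w(v)$ with $w(v)=\varphi_{d^+(v)}$ if $c(v)=b$ and $w(v)=\psi_{c(v)}$ if $c(v)<b$, where $d^+(v)$ is the number of children of $v$; $\varphi(t)=\sum_k\varphi_k t^k$. $\mathcal{T}$ is the set of increasingly labelled ordered bucket trees with these weights; $T_n$ is the total weight of those of size $n$. Random tree model: a tree of size $n$ is chosen with probability $w(T)/T_n$; an unordered increasingly labelled bucket tree $U$ gets probability $w\cdot\prod_{v}d^+(v)!/T_n$ (the weight of any of its $\prod_v d^+(v)!$ ordered versions, times their number, over $T_n$). For $T$ of size $n$, $T\to T'$ means $T'$ arises from $T$ by inserting label $n+1$: either adding it to an unsaturated node, or attaching to a saturated node $u$ a new bucket containing only $n+1$ at one of the $d^+(u)+1$ possible positions among its children; $T\xrightarrow{v}T'$ means this is done at node $v$. Growth processes (unordered trees): start with a root bucket containing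 label 1; given the tree of size $n\ge1$, a node $v$ is chosen with probability $p(v)$; if $v$ is unsaturated, label $n+1$ is added to $v$, otherwise a new child bucket of $v$ containing only $n+1$ is created. Here, with capacities and out-degrees taken in the current tree of size $n$: bucket recursive trees $p(v)=c(v)/n$; $(b,d)$-ary increasing trees ($d\ge2$ integer) $p(v)=\frac{(d-1)c(v)+1-d^+(v)}{(d-1)n+1}$; $(b,\alpha)$-plane oriented recursive trees ($\alpha>0$) $p(v)=\frac{d^+(v)+(\alpha+1)c(v)-1}{(\alpha+1)n-1}$. *)

theory Defs
  imports "HOL-Analysis.Analysis" "HOL-Library.Multiset"
begin

text \<open>A node (bucket) is given by the set of labels it contains; its capacity is the
  cardinality of this set. Children are ordered (a list).\<close>
datatype ltree = LNode "nat set" "ltree list"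

datatype utree = UNode "nat set" "utree multiset"

primrec labels :: "ltree \<Rightarrow> nat set" where
  "labels (LNode L ts) = L \<union> \<Union> (set (map labels ts))"

primrec tsize :: "ltree \<Rightarrow> nat" where
  "tsize (LNode L ts) = card L + sum_list (map tsize ts)"

primrec buckets :: "ltree \<Rightarrow> nat set set" where
  "buckets (LNode L ts) = insert L (\<Union> (set (map buckets ts)))"

primrec wf_bt :: "nat \<Rightarrow> ltree \<Rightarrow> bool" where
  "wf_bt b (LNode L ts) = (1 \<le> card L \<and> card L \<le> b \<and> (ts \<noteq> [] \<longrightarrow> card L = b)
                           \<and> list_all (wf_bt b) ts)"

primrec incr :: "ltree \<Rightarrow> bool" where
  "incr (LNode L ts) = ((\<forall>t\<in>set ts. \<forall>x\<in>L. \<forall>y\<in>labels t. x < y) \<and> list_all incr ts)"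

definition OT :: "nat \<Rightarrow> nat \<Rightarrow> ltree set" where
  "OT b n = {T. wf_bt b T \<and> incr T \<and> tsize T = n \<and> labels T = {1..n}}"

primrec weight :: "(nat \<Rightarrow> real) \<Rightarrow> (nat \<Rightarrow> real) \<Rightarrow> nat \<Rightarrow> ltree \<Rightarrow> real" where
  "weight \<phi> \<psi> b (LNode L ts) =
     (if card L = b then \<phi> (length ts) else \<psi> (card L)) * prod_list (map (weight \<phi> \<psi> b) ts)"

definition Tn :: "(nat \<Rightarrow> real) \<Rightarrow> (nat \<Rightarrow> real) \<Rightarrow> nat \<Rightarrow> nat \<Rightarrow> real" where
  "Tn \<phi> \<psi> b n = (\<Sum>T\<in>OT b n. weight \<phi> \<psi> b T)"

text \<open>Out-degree of the node with label set S (nodes have distinct label sets).\<close>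
primrec bdeg :: "ltree \<Rightarrow> nat set \<Rightarrow> nat" where
  "bdeg (LNode L ts) S = (if L = S then length ts else sum_list (map (\<lambda>t. bdeg t S) ts))"

inductive ins_at :: "nat \<Rightarrow> nat \<Rightarrow> nat set \<Rightarrow> ltree \<Rightarrow> ltree \<Rightarrow> bool" where
  unsat: "card L < b \<Longrightarrow> ins_at b m L (LNode L ts) (LNode (insert m L) ts)"
| sat: "card L = b \<Longrightarrow> i \<le> length ts \<Longrightarrow>
          ins_at b m L (LNode L ts) (LNode L (take i ts @ LNode {m} [] # drop i ts))"
| down: "L \<noteq> S \<Longrightarrow> i < length ts \<Longrightarrow> ins_at b m S (ts ! i) t' \<Longrightarrow>
          ins_at b m S (LNode L ts) (LNode L (ts[i := t']))"

definition pT :: "(nat \<Rightarrow> real) \<Rightarrow> (nat \<Rightarrow> real) \<Rightarrow> nat \<Rightarrow> nat \<Rightarrow> ltree \<Rightarrow> nat set \<Rightarrow> real" where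
  "pT \<phi> \<psi> b n T v =
     (\<Sum>T'\<in>{T'. ins_at b (Suc n) v T T'}. weight \<phi> \<psi> b T') /
     (\<Sum>T'\<in>{T'. \<exists>u. ins_at b (Suc n) u T T'}. weight \<phi> \<psi> b T')"

primrec unord :: "ltree \<Rightarrow> utree" where
  "unord (LNode L ts) = UNode L (mset (map unord ts))"

primrec ubuckets :: "utree \<Rightarrow> nat set set" where
  "ubuckets (UNode L cs) = insert L (\<Union> (set_mset (image_mset ubuckets cs)))"

primrec udeg :: "utree \<Rightarrow> nat set \<Rightarrow> nat" where
  "udeg (UNode L cs) S = (if L = S then size cs else sum_mset (image_mset (\<lambda>t. udeg t S) cs))"

primrec ugrow :: "nat \<Rightarrow> nat \<Rightarrow> nat set \<Rightarrow> utree \<Rightarrow> utree" where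
  "ugrow b m S (UNode L cs) =
     (if L = S then (if card L < b then UNode (insert m L) cs
                     else UNode L (add_mset (UNode {m} {#}) cs))
      else UNode L (image_mset (ugrow b m S) cs))"

fun reach :: "nat \<Rightarrow> nat \<Rightarrow> utree set" where
  "reach b 0 = {}"
| "reach b (Suc 0) = {UNode {1} {#}}"
| "reach b (Suc (Suc n)) =
     {ugrow b (Suc (Suc n)) S U | U S. U \<in> reach b (Suc n) \<and> S \<in> ubuckets U}"

text \<open>Law of the growth process. \<open>p n c k\<close> is the probability of choosing a node of
  capacity c and out-degree k in a tree of size n.\<close>
fun gp_law :: "nat \<Rightarrow> (nat \<Rightarrow> nat \<Rightarrow> nat \<Rightarrow> real) \<Rightarrow> nat \<Rightarrow> utree \<Rightarrow> real" where
  "gp_law b p 0 U = 0"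
| "gp_law b p (Suc 0) U = (if U = UNode {1} {#} then 1 else 0)"
| "gp_law b p (Suc (Suc n)) U' =
     (\<Sum>U\<in>reach b (Suc n). gp_law b p (Suc n) U *
        (\<Sum>S\<in>ubuckets U. if ugrow b (Suc (Suc n)) S U = U'
                           then p (Suc n) (card S) (udeg U S) else 0))"

definition rt_law :: "(nat \<Rightarrow> real) \<Rightarrow> (nat \<Rightarrow> real) \<Rightarrow> nat \<Rightarrow> nat \<Rightarrow> utree \<Rightarrow> real" where
  "rt_law \<phi> \<psi> b n U =
     (\<Sum>T\<in>OT b n. if unord T = U then weight \<phi> \<psi> b T else 0) / Tn \<phi> \<psi> b n"

definition attraction_agrees ::
  "(nat \<Rightarrow> real) \<Rightarrow> (nat \<Rightarrow> real) \<Rightarrow> nat \<Rightarrow> (nat \<Rightarrow> nat \<Rightarrow> nat \<Rightarrow> real) \<Rightarrow> bool" where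
  "attraction_agrees \<phi> \<psi> b p =
     (\<forall>n T v. T \<in> OT b n \<and> weight \<phi> \<psi> b T \<noteq> 0 \<and> v \<in> buckets T \<longrightarrow>
        pT \<phi> \<psi> b n T v = p n (card v) (bdeg T v))"

definition laws_agree ::
  "(nat \<Rightarrow> real) \<Rightarrow> (nat \<Rightarrow> real) \<Rightarrow> nat \<Rightarrow> (nat \<Rightarrow> nat \<Rightarrow> nat \<Rightarrow> real) \<Rightarrow> bool" where
  "laws_agree \<phi> \<psi> b p = (\<forall>n\<ge>1. \<forall>U. gp_law b p n U = rt_law \<phi> \<psi> b n U)"

definition rec_phi :: "nat \<Rightarrow> nat \<Rightarrow> real" where
  "rec_phi b k = fact (b - 1) * real b ^ k / fact k"
definition rec_psi :: "nat \<Rightarrow> real" where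
  "rec_psi k = fact (k - 1)"
definition rec_p :: "nat \<Rightarrow> nat \<Rightarrow> nat \<Rightarrow> real" where
  "rec_p n c k = real c / real n"

definition dary_phi :: "nat \<Rightarrow> nat \<Rightarrow> nat \<Rightarrow> real" where
  "dary_phi b d k = fact (b - 1) * (real d - 1) ^ (b - 1)
      * ((real (b - 1) + 1 / (real d - 1)) gchoose (b - 1)) * real ((b * (d - 1) + 1) choose k)"
definition dary_psi :: "nat \<Rightarrow> nat \<Rightarrow> real" where
  "dary_psi d k = fact (k - 1) * (real d - 1) ^ (k - 1)
      * ((real (k - 1) + 1 / (real d - 1)) gchoose (k - 1))"
definition dary_p :: "nat \<Rightarrow> nat \<Rightarrow> nat \<Rightarrow> nat \<Rightarrow> real" where
  "dary_p d n c k = ((real d - 1) * real c + 1 - real k) / ((real d - 1) * real n + 1)"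

definition porr_phi :: "nat \<Rightarrow> real \<Rightarrow> nat \<Rightarrow> real" where
  "porr_phi b \<alpha> k = fact (b - 1) * (\<alpha> + 1) ^ (b - 1)
      * ((real (b - 1) - 1 / (\<alpha> + 1)) gchoose (b - 1))
      * (((\<alpha> + 1) * real b - 2 + real k) gchoose k)"
definition porr_psi :: "real \<Rightarrow> nat \<Rightarrow> real" where
  "porr_psi \<alpha> k = fact (k - 1) * (\<alpha> + 1) ^ (k - 1)
      * ((real (k - 1) - 1 / (\<alpha> + 1)) gchoose (k - 1))"
definition porr_p :: "real \<Rightarrow> nat \<Rightarrow> nat \<Rightarrow> nat \<Rightarrow> real" where
  "porr_p \<alpha> n c k = (real k + (\<alpha> + 1) * real c - 1) / ((\<alpha> + 1) * real n - 1)"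

end

theory Submission
  imports Defs
begin


lemma card_Union_list:
  fixes As :: "'a set list"
  assumes "\<forall>A\<in>set As. finite A"
  shows "card (\<Union>(set As)) \<le> sum_list (map card As) \<and>
    (card (\<Union>(set As)) = sum_list (map card As) \<longrightarrow>
      (\<forall>i<length As. \<forall>j<length As. i \<noteq> j \<longrightarrow> As!i \<inter> As!j = {}))"
  using assms
proof (induction As)
  case Nil
  then show ?case by simp
next
  case (Cons A As)
  have fA: "finite A" and fU: "finite (\<Union>(set As))" using Cons.prems by auto
  have IH: "card (\<Union>(set As)) \<le> sum_list (map card As)"
    "card (\<Union>(set As)) = sum_list (map card As) \<Longrightarrow> (\<forall>i<length As. \<forall>j<length As. i \<noteq> j \<longrightarrow> As!i \<inter> As!j = {})"
    using Cons by auto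
  have e: "card (A \<union> \<Union>(set As)) + card (A \<inter> \<Union>(set As)) = card A + card (\<Union>(set As))"
    using card_Un_Int[OF fA fU] by simp
  show ?case
  proof (intro conjI impI)
    show "card (\<Union>(set (A # As))) \<le> sum_list (map card (A # As))" using e IH(1) by simp
  next
    assume eq: "card (\<Union>(set (A # As))) = sum_list (map card (A # As))"
    then have eq1: "card (\<Union>(set As)) = sum_list (map card As)" and i0: "card (A \<inter> \<Union>(set As)) = 0"
      using e IH(1) by auto
    have dA: "A \<inter> \<Union>(set As) = {}" using i0 fA by simp
    note IH2 = IH(2)[OF eq1]
    show "\<forall>i<length (A # As). \<forall>j<length (A # As). i \<noteq> j \<longrightarrow> (A # As) ! i \<inter> (A # As) ! j = {}"
    proof (intro allI impI)
      fix i j assume "i < length (A # As)" "j < length (A # As)" "i \<noteq> j"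
      then show "(A # As) ! i \<inter> (A # As) ! j = {}"
        using IH2 dA by (cases i; cases j) (auto simp: nth_mem, (meson nth_mem disjoint_iff UnionI)+)
    qed
  qed
qed

lemma sum_list_eq_each:
  fixes f g :: "'b \<Rightarrow> nat"
  shows "(\<And>x. x \<in> set xs \<Longrightarrow> f x \<le> g x) \<Longrightarrow> sum_list (map f xs) = sum_list (map g xs) \<Longrightarrow> \<forall>x\<in>set xs. f x = g x"
proof (induction xs)
  case Nil then show ?case by simp
next
  case (Cons x xs)
  have "sum_list (map f xs) \<le> sum_list (map g xs)" using Cons.prems(1) by (simp add: sum_list_mono)
  moreover have "f x \<le> g x" using Cons.prems(1) by simp
  moreover have "f x + sum_list (map f xs) = g x + sum_list (map g xs)" using Cons.prems(2) by simp
  ultimately have fx: "f x = g x" and sx: "sum_list (map f xs) = sum_list (map g xs)" by linarith+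
  have "\<forall>x\<in>set xs. f x = g x" using Cons.IH[OF _ sx] Cons.prems(1) by simp
  then show ?case using fx by simp
qed

definition nw :: "(nat \<Rightarrow> real) \<Rightarrow> (nat \<Rightarrow> real) \<Rightarrow> nat \<Rightarrow> nat \<Rightarrow> nat \<Rightarrow> real" where
  "nw \<phi> \<psi> b c k = (if c = b then \<phi> k else \<psi> c)"

lemma weight_nw: "weight \<phi> \<psi> b (LNode L ts) = nw \<phi> \<psi> b (card L) (length ts) * prod_list (map (weight \<phi> \<psi> b) ts)"
  by (simp add: nw_def)

primrec dj :: "ltree \<Rightarrow> bool" where
  "dj (LNode L ts) = (finite L \<and> (\<forall>j<length ts. L \<inter> labels (ts!j) = {})
     \<and> (\<forall>i<length ts. \<forall>j<length ts. i \<noteq> j \<longrightarrow> labels (ts!i) \<inter> labels (ts!j) = {})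
     \<and> list_all dj ts)"

lemma wf_card: "wf_bt b T \<Longrightarrow> finite (labels T) \<and> card (labels T) \<le> tsize T \<and> (card (labels T) = tsize T \<longrightarrow> dj T)"
proof (induction T)
  case (LNode L ts)
  have wfL: "1 \<le> card L" and wts: "\<forall>t\<in>set ts. wf_bt b t" using LNode.prems by (auto simp: list_all_iff)
  have fL: "finite L" using wfL card.infinite by force
  have IH: "\<And>t. t \<in> set ts \<Longrightarrow> finite (labels t) \<and> card (labels t) \<le> tsize t \<and> (card (labels t) = tsize t \<longrightarrow> dj t)"
    using LNode.IH wts by blast
  let ?As = "L # map labels ts"
  have lab: "labels (LNode L ts) = \<Union>(set ?As)" by simp
  have fin: "\<forall>A\<in>set ?As. finite A" using fL IH by auto
  note CU = card_Union_list[OF fin]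
  have s1: "sum_list (map (\<lambda>t. card (labels t)) ts) \<le> sum_list (map tsize ts)"
    using IH by (simp add: sum_list_mono)
  have cs: "sum_list (map card ?As) = card L + sum_list (map (\<lambda>t. card (labels t)) ts)"
    by (simp add: o_def)
  show ?case
  proof (intro conjI impI)
    show "finite (labels (LNode L ts))" using fin lab by auto
    show "card (labels (LNode L ts)) \<le> tsize (LNode L ts)" using CU s1 lab cs by simp
  next
    assume eq: "card (labels (LNode L ts)) = tsize (LNode L ts)"
    then have e1: "card (\<Union>(set ?As)) = sum_list (map card ?As)"
      and e2: "sum_list (map (\<lambda>t. card (labels t)) ts) = sum_list (map tsize ts)"
      using CU s1 lab cs by auto
    have each: "\<forall>t\<in>set ts. card (labels t) = tsize t"
      using sum_list_eq_each[OF _ e2] IH by blast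
    have pw: "\<forall>i<length ?As. \<forall>j<length ?As. i \<noteq> j \<longrightarrow> ?As!i \<inter> ?As!j = {}" using CU e1 by blast
    have p1: "\<forall>j<length ts. L \<inter> labels (ts!j) = {}"
    proof (intro allI impI)
      fix j assume "j < length ts"
      then show "L \<inter> labels (ts!j) = {}" using pw[rule_format, of 0 "Suc j"] by simp
    qed
    have p2: "\<forall>i<length ts. \<forall>j<length ts. i \<noteq> j \<longrightarrow> labels (ts!i) \<inter> labels (ts!j) = {}"
    proof (intro allI impI)
      fix i j assume "i < length ts" "j < length ts" "i \<noteq> j"
      then show "labels (ts!i) \<inter> labels (ts!j) = {}" using pw[rule_format, of "Suc i" "Suc j"] by simp
    qed
    have "list_all dj ts" using IH each by (auto simp: list_all_iff)
    then show "dj (LNode L ts)" using fL p1 p2 by simp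
  qed
qed

lemma OT_dj: "T \<in> OT b n \<Longrightarrow> dj T"
  using wf_card[of b T] by (auto simp: OT_def)

lemma buckets_sub: "v \<in> buckets T \<Longrightarrow> v \<subseteq> labels T"
  by (induction T) auto

lemma wf_bucket: "wf_bt b T \<Longrightarrow> v \<in> buckets T \<Longrightarrow> 1 \<le> card v \<and> card v \<le> b"
  by (induction T) (auto simp: list_all_iff)

lemma wf_bucket_ne: "wf_bt b T \<Longrightarrow> v \<in> buckets T \<Longrightarrow> v \<noteq> {}"
  using wf_bucket[of b T v] by auto

lemma finite_buckets: "finite (buckets T)"
  by (induction T) auto

lemma wf_labels_ne: "wf_bt b T \<Longrightarrow> labels T \<noteq> {}"
  by (cases T) auto

lemma dj_child_unique:
  assumes "dj (LNode L ts)" "wf_bt b (LNode L ts)" "i < length ts" "j < length ts"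
    "v \<in> buckets (ts!i)" "v \<in> buckets (ts!j)"
  shows "i = j"
proof (rule ccontr)
  assume "i \<noteq> j"
  then have "labels (ts!i) \<inter> labels (ts!j) = {}" using assms(1,3,4) by simp
  moreover have "wf_bt b (ts!i)" using assms(2,3) by (simp add: list_all_iff)
  then have "v \<noteq> {}" using wf_bucket_ne assms(5) by blast
  ultimately show False using buckets_sub[OF assms(5)] buckets_sub[OF assms(6)] by blast
qed

lemma dj_root_notin:
  assumes "dj (LNode L ts)" "wf_bt b (LNode L ts)" "j < length ts"
  shows "L \<notin> buckets (ts!j)"
proof
  assume "L \<in> buckets (ts!j)"
  then have "L \<subseteq> labels (ts!j)" by (rule buckets_sub)
  moreover have "L \<inter> labels (ts!j) = {}" using assms by simp
  moreover have "L \<noteq> {}" using assms(2) by auto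
  ultimately show False by blast
qed

lemma bdeg_notin: "S \<notin> buckets t \<Longrightarrow> bdeg t S = 0"
  by (induction t) (auto simp: sum_list_eq_0_iff)

lemma ins_at_bucket: "ins_at b m S T T' \<Longrightarrow> S \<in> buckets T"
  by (induction rule: ins_at.induct) auto

lemma sum_list_upd: "i < length xs \<Longrightarrow> sum_list (xs[i:=y]) + xs!i = sum_list xs + (y::'a::comm_monoid_add)"
proof (induction xs arbitrary: i)
  case Nil then show ?case by simp
next
  case (Cons x xs)
  show ?case
  proof (cases i)
    case 0 then show ?thesis by (simp add: add.commute add.left_commute)
  next
    case (Suc j)
    then have "sum_list (xs[j:=y]) + xs!j = sum_list xs + y" using Cons by simp
    then show ?thesis using Suc by (simp add: add.assoc)
  qed
qed

lemma sum_list_take_drop: "sum_list (map f (take i xs)) + sum_list (map f (drop i xs)) = sum_list (map f xs)"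
proof -
  have "sum_list (map f (take i xs) @ map f (drop i xs)) = sum_list (map f (take i xs)) + sum_list (map f (drop i xs))"
    by (rule sum_list_append)
  moreover have "map f (take i xs) @ map f (drop i xs) = map f xs"
    by (simp only: map_append[symmetric] append_take_drop_id)
  ultimately show ?thesis by simp
qed

lemma prod_list_take_drop: "prod_list (map f (take i xs)) * prod_list (map f (drop i xs)) = prod_list (map f xs)"
proof -
  have "prod_list (map f (take i xs) @ map f (drop i xs)) = prod_list (map f (take i xs)) * prod_list (map f (drop i xs))"
    by (rule prod_list.append)
  moreover have "map f (take i xs) @ map f (drop i xs) = map f xs"
    by (simp only: map_append[symmetric] append_take_drop_id)
  ultimately show ?thesis by simp
qed

lemma ins_at_props:
  "ins_at b m S T T' \<Longrightarrow> wf_bt b T \<Longrightarrow> m \<notin> labels T \<Longrightarrow> 1 \<le> b \<Longrightarrow>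
   wf_bt b T' \<and> tsize T' = Suc (tsize T) \<and> labels T' = insert m (labels T)
   \<and> (incr T \<longrightarrow> (\<forall>x\<in>labels T. x < m) \<longrightarrow> incr T')"
proof (induction rule: ins_at.induct)
  case (unsat L b m ts)
  then have ts: "ts = []" by auto
  have fL: "finite L" using unsat by (auto intro: card_ge_0_finite)
  have mL: "m \<notin> L" using unsat by auto
  show ?case using unsat ts fL mL by auto
next
  case (sat L b i ts m)
  let ?x = "LNode {m} []"
  have st: "set ts = set (take i ts) \<union> set (drop i ts)"
    by (simp only: set_append[symmetric] append_take_drop_id)
  have sm: "sum_list (map tsize ts) = sum_list (map tsize (take i ts)) + sum_list (map tsize (drop i ts))"
    by (simp only: sum_list_take_drop)
  have wf1: "wf_bt b ?x" using sat by simp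
  have "list_all (wf_bt b) ts" using sat by simp
  then have "list_all (wf_bt b) (take i ts @ ?x # drop i ts)"
    using wf1 st by (auto simp: list_all_iff)
  then have W: "wf_bt b (LNode L (take i ts @ ?x # drop i ts))" using sat by simp
  have Lb: "labels (LNode L (take i ts @ ?x # drop i ts)) = insert m (labels (LNode L ts))"
    using st by auto
  have I: "incr (LNode L ts) \<longrightarrow> (\<forall>x\<in>labels (LNode L ts). x < m) \<longrightarrow> incr (LNode L (take i ts @ ?x # drop i ts))"
  proof (intro impI)
    assume i1: "incr (LNode L ts)" and i2: "\<forall>x\<in>labels (LNode L ts). x < m"
    have "\<forall>t\<in>set ts. \<forall>x\<in>L. \<forall>y\<in>labels t. x < y" "list_all incr ts" using i1 by auto
    then show "incr (LNode L (take i ts @ ?x # drop i ts))" using i2 st by (auto simp: list_all_iff)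
  qed
  show ?case using W Lb I sm by simp
next
  case (down L S i ts b m t')
  have ti: "ts!i \<in> set ts" using down by simp
  have wfi: "wf_bt b (ts!i)" using down ti by (auto simp: list_all_iff)
  have mi: "m \<notin> labels (ts!i)" using down ti by auto
  have IH: "wf_bt b t' \<and> tsize t' = Suc (tsize (ts!i)) \<and> labels t' = insert m (labels (ts!i))
     \<and> (incr (ts!i) \<longrightarrow> (\<forall>x\<in>labels (ts!i). x < m) \<longrightarrow> incr t')"
    using down.IH wfi mi down.prems by blast
  have e1: "ts = take i ts @ ts!i # drop (Suc i) ts" using down by (simp add: id_take_nth_drop)
  have e2: "ts[i:=t'] = take i ts @ t' # drop (Suc i) ts" using down by (simp add: upd_conv_take_nth_drop)
  have wfl: "list_all (wf_bt b) ts" using down by simp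
  then have "list_all (wf_bt b) (take i ts) \<and> list_all (wf_bt b) (drop (Suc i) ts)"
    by (subst (asm) e1) simp
  then have W: "wf_bt b (LNode L (ts[i:=t']))" using down IH e2 by (auto simp: e2)
  have S: "tsize (LNode L (ts[i:=t'])) = Suc (tsize (LNode L ts))"
    using IH by (subst e2, subst (2) e1) simp
  have Lb: "labels (LNode L (ts[i:=t'])) = insert m (labels (LNode L ts))"
    using IH by (subst e2, subst (2) e1) auto
  have I: "incr (LNode L ts) \<longrightarrow> (\<forall>x\<in>labels (LNode L ts). x < m) \<longrightarrow> incr (LNode L (ts[i:=t']))"
  proof (intro impI)
    assume i1: "incr (LNode L ts)" and i2: "\<forall>x\<in>labels (LNode L ts). x < m"
    have a1: "\<forall>t\<in>set (take i ts @ ts!i # drop (Suc i) ts). \<forall>x\<in>L. \<forall>y\<in>labels t. x < y"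
         "list_all incr (take i ts @ ts!i # drop (Suc i) ts)" using i1 e1 by (metis incr.simps)+
    have "incr t'" using IH a1(2) i2 ti by auto
    moreover have "\<forall>x\<in>L. \<forall>y\<in>labels t'. x < y" using a1(1) IH i2 by auto
    ultimately show "incr (LNode L (ts[i:=t']))" using a1 by (subst e2) (auto simp: list_all_iff)
  qed
  show ?case using W S Lb I by blast
qed


lemma ins_labels: "ins_at b m u T T' \<Longrightarrow> labels T' = insert m (labels T)"
proof (induction rule: ins_at.induct)
  case (unsat L b m ts) then show ?case by auto
next
  case (sat L b i ts m)
  have st: "set ts = set (take i ts) \<union> set (drop i ts)"
    by (simp only: set_append[symmetric] append_take_drop_id)
  show ?case using st by auto
next
  case (down L S i ts b m t')
  have e1: "ts = take i ts @ ts!i # drop (Suc i) ts" using down by (simp add: id_take_nth_drop)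
  have e2: "ts[i:=t'] = take i ts @ t' # drop (Suc i) ts" using down by (simp add: upd_conv_take_nth_drop)
  show ?case using down.IH by (subst e2, subst (2) e1) auto
qed

lemma other_idx:
  assumes "t \<in> set (take i ts) \<or> t \<in> set (drop (Suc i) ts)"
  shows "\<exists>j<length ts. j \<noteq> i \<and> t = ts!j"
  using assms
proof
  assume "t \<in> set (take i ts)"
  then obtain j where j: "j < length (take i ts)" "t = take i ts ! j" by (auto simp: in_set_conv_nth)
  then show ?thesis by (intro exI[of _ j]) auto
next
  assume "t \<in> set (drop (Suc i) ts)"
  then obtain j where j: "j < length (drop (Suc i) ts)" "t = drop (Suc i) ts ! j" by (auto simp: in_set_conv_nth)
  then show ?thesis by (intro exI[of _ "Suc i + j"]) auto
qed

lemma pred_exists: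
  "wf_bt b T' \<Longrightarrow> incr T' \<Longrightarrow> dj T' \<Longrightarrow> m \<in> labels T' \<Longrightarrow> (\<forall>x\<in>labels T'. x \<le> m) \<Longrightarrow> labels T' \<noteq> {m} \<Longrightarrow>
   \<exists>T u. ins_at b m u T T' \<and> wf_bt b T \<and> incr T \<and> labels T = labels T' - {m}"
proof (induction T')
  case (LNode L ts)
  have wfL: "1 \<le> card L" "card L \<le> b" "ts \<noteq> [] \<longrightarrow> card L = b" and wfts: "\<forall>t\<in>set ts. wf_bt b t"
    using LNode.prems(1) by (auto simp: list_all_iff)
  have incrL: "\<forall>t\<in>set ts. \<forall>x\<in>L. \<forall>y\<in>labels t. x < y" and incrts: "\<forall>t\<in>set ts. incr t"
    using LNode.prems(2) by (auto simp: list_all_iff)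
  have fL: "finite L" and p1: "\<forall>j<length ts. L \<inter> labels (ts!j) = {}"
    and p2: "\<forall>i<length ts. \<forall>j<length ts. i \<noteq> j \<longrightarrow> labels (ts!i) \<inter> labels (ts!j) = {}"
    and djts: "\<forall>t\<in>set ts. dj t"
    using LNode.prems(3) by (auto simp: list_all_iff)
  have mx: "\<forall>x\<in>labels (LNode L ts). x \<le> m" by (rule LNode.prems(5))
  show ?case
  proof (cases "m \<in> L")
    case True
    have ts: "ts = []"
    proof (rule ccontr)
      assume "ts \<noteq> []" then obtain t where t: "t \<in> set ts" by (cases ts) auto
      then have "labels t \<noteq> {}" using wfts wf_labels_ne by blast
      then obtain y where y: "y \<in> labels t" by blast
      then have "m < y" using incrL t True by blast
      moreover have "y \<le> m" using mx t y by auto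
      ultimately show False by simp
    qed
    then have Lm: "L \<noteq> {m}" using LNode.prems(6) by simp
    then obtain y where y: "y \<in> L" "y \<noteq> m" using True by blast
    have "card {m, y} \<le> card L" using fL y True by (intro card_mono) auto
    then have c2: "2 \<le> card L" using y by simp
    have c: "card (L - {m}) = card L - 1" using True fL by simp
    have ins: "ins_at b m (L - {m}) (LNode (L - {m}) []) (LNode (insert m (L - {m})) [])"
      by (rule ins_at.unsat) (use c wfL in simp)
    then have ins': "ins_at b m (L - {m}) (LNode (L - {m}) []) (LNode L ts)"
      using True ts by (simp add: insert_absorb)
    show ?thesis
      by (intro exI[of _ "LNode (L - {m}) []"] exI[of _ "L - {m}"] conjI ins') (use c c2 wfL ts in auto)
  next
    case False
    then obtain i where i: "i < length ts" "m \<in> labels (ts!i)"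
      using LNode.prems(4) by (auto simp: in_set_conv_nth)
    have tsi: "ts!i \<in> set ts" using i by simp
    have e1: "ts = take i ts @ ts!i # drop (Suc i) ts" using i(1) by (rule id_take_nth_drop)
    have others: "\<And>t. t \<in> set (take i ts) \<or> t \<in> set (drop (Suc i) ts) \<Longrightarrow> m \<notin> labels t"
    proof -
      fix t assume "t \<in> set (take i ts) \<or> t \<in> set (drop (Suc i) ts)"
      then obtain j where j: "j < length ts" "j \<noteq> i" "t = ts!j" using other_idx by meson
      then have "labels (ts!j) \<inter> labels (ts!i) = {}" using p2 i(1) by simp
      then show "m \<notin> labels t" using i(2) j(3) by auto
    qed
    have sub: "set (take i ts) \<subseteq> set ts" "set (drop (Suc i) ts) \<subseteq> set ts"
      by (auto dest: in_set_takeD in_set_dropD)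
    show ?thesis
    proof (cases "ts!i = LNode {m} []")
      case True
      let ?ts' = "take i ts @ drop (Suc i) ts"
      have e: "take i ?ts' @ LNode {m} [] # drop i ?ts' = ts"
        using i True e1 by simp
      have cb: "card L = b" using wfL i by auto
      have "ins_at b m L (LNode L ?ts') (LNode L (take i ?ts' @ LNode {m} [] # drop i ?ts'))"
        by (rule ins_at.sat) (use cb i in auto)
      then have ins: "ins_at b m L (LNode L ?ts') (LNode L ts)" by (simp only: e)
      have wf: "wf_bt b (LNode L ?ts')" using wfL cb wfts sub by (auto simp: list_all_iff)
      have inc: "incr (LNode L ?ts')" using incrL incrts sub by (auto simp: list_all_iff)
      have lab: "labels (LNode L ?ts') = labels (LNode L ts) - {m}"
      proof -
        have "labels (LNode L ts) = L \<union> {m} \<union> \<Union>(labels ` set (take i ts)) \<union> \<Union>(labels ` set (drop (Suc i) ts))"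
          using True by (subst e1) auto
        then show ?thesis using others False by auto
      qed
      show ?thesis using ins wf inc lab by blast
    next
      case False
      have ne: "labels (ts!i) \<noteq> {m}"
      proof
        assume lm: "labels (ts!i) = {m}"
        obtain L' ts'' where ti: "ts!i = LNode L' ts''" by (cases "ts!i")
        have "wf_bt b (ts!i)" "incr (ts!i)" using wfts incrts tsi by blast+
        then have wfi: "wf_bt b (LNode L' ts'')" and ici: "incr (LNode L' ts'')" using ti by simp_all
        have "L' \<noteq> {}" using wfi by auto
        then have L': "L' = {m}" using lm ti by auto
        have "ts'' = []"
        proof (rule ccontr)
          assume "ts'' \<noteq> []" then obtain t where t: "t \<in> set ts''" by (cases ts'') auto
          then have "wf_bt b t" using wfi by (simp add: list_all_iff)
          then have "labels t \<noteq> {}" using wf_labels_ne by blast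
          then obtain y where y: "y \<in> labels t" by blast
          then have "y = m" using lm ti t by auto
          moreover have "m < y" using ici t y L' by auto
          ultimately show False by simp
        qed
        then show False using False ti L' by simp
      qed
      have "\<exists>T u. ins_at b m u T (ts!i) \<and> wf_bt b T \<and> incr T \<and> labels T = labels (ts!i) - {m}"
      proof (rule LNode.IH[OF tsi])
        show "wf_bt b (ts!i)" "incr (ts!i)" "dj (ts!i)" using wfts incrts djts tsi by blast+
        show "m \<in> labels (ts!i)" "labels (ts!i) \<noteq> {m}" using i ne by blast+
        show "\<forall>x\<in>labels (ts!i). x \<le> m" using mx tsi by auto
      qed
      then obtain t0 u where t0: "ins_at b m u t0 (ts!i)" "wf_bt b t0" "incr t0" "labels t0 = labels (ts!i) - {m}"
        by blast
      have uL: "u \<noteq> L"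
      proof
        assume "u = L"
        have "u \<in> buckets t0" using t0(1) by (rule ins_at_bucket)
        then have "u \<subseteq> labels t0" "u \<noteq> {}" using buckets_sub wf_bucket_ne t0(2) by blast+
        then show False using \<open>u = L\<close> p1 i t0(4) by blast
      qed
      have "ins_at b m u (LNode L (ts[i:=t0])) (LNode L ((ts[i:=t0])[i := ts!i]))"
        by (rule ins_at.down) (use uL i t0 in auto)
      then have ins: "ins_at b m u (LNode L (ts[i:=t0])) (LNode L ts)" by simp
      have e2: "ts[i:=t0] = take i ts @ t0 # drop (Suc i) ts" using i by (simp add: upd_conv_take_nth_drop)
      have wf: "wf_bt b (LNode L (ts[i:=t0]))" using wfL wfts sub t0 i by (subst e2) (auto simp: list_all_iff)
      have inc: "incr (LNode L (ts[i:=t0]))"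
      proof -
        have "\<forall>x\<in>L. \<forall>y\<in>labels (ts!i). x < y" using incrL tsi by blast
        then show ?thesis using incrL incrts sub t0 i by (subst e2) (auto simp: list_all_iff)
      qed
      have lab: "labels (LNode L (ts[i:=t0])) = labels (LNode L ts) - {m}"
      proof -
        have "labels (LNode L ts) = L \<union> labels (ts!i) \<union> \<Union>(labels ` set (take i ts)) \<union> \<Union>(labels ` set (drop (Suc i) ts))"
          by (subst e1) auto
        moreover have "labels (LNode L (ts[i:=t0])) = L \<union> labels t0 \<union> \<Union>(labels ` set (take i ts)) \<union> \<Union>(labels ` set (drop (Suc i) ts))"
          by (subst e2) auto
        ultimately show ?thesis using others \<open>m \<notin> L\<close> t0(4) by auto
      qed
      show ?thesis using ins wf inc lab by blast
    qed
  qed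
qed

primrec del :: "nat \<Rightarrow> ltree \<Rightarrow> ltree" where
  "del m (LNode L ts) = LNode (L - {m}) (filter (\<lambda>t. t \<noteq> LNode {} []) (map (del m) ts))"

lemma del_id: "m \<notin> labels T \<Longrightarrow> wf_bt b T \<Longrightarrow> del m T = T"
proof (induction T)
  case (LNode L ts)
  have "map (del m) ts = ts" using LNode by (intro map_idI) (auto simp: list_all_iff)
  moreover have "\<forall>t\<in>set ts. t \<noteq> LNode {} []" using LNode.prems(2) by (auto simp: list_all_iff)
  ultimately have f: "filter (\<lambda>t. t \<noteq> LNode {} []) (map (del m) ts) = ts" by (auto intro: filter_True)
  then show ?case using LNode.prems by auto
qed

lemma del_ins: "ins_at b m u T T' \<Longrightarrow> wf_bt b T \<Longrightarrow> m \<notin> labels T \<Longrightarrow> del m T' = T"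
proof (induction rule: ins_at.induct)
  case (unsat L b m ts)
  have "map (del m) ts = ts" using unsat.prems by (intro map_idI del_id) (auto simp: list_all_iff)
  moreover have "\<forall>t\<in>set ts. t \<noteq> LNode {} []" using unsat.prems by (auto simp: list_all_iff)
  ultimately have f: "filter (\<lambda>t. t \<noteq> LNode {} []) (map (del m) ts) = ts" by (auto intro: filter_True)
  then show ?case using unsat.prems by auto
next
  case (sat L b i ts m)
  have st: "set ts = set (take i ts) \<union> set (drop i ts)"
    by (simp only: set_append[symmetric] append_take_drop_id)
  have m1: "map (del m) ts = ts" using sat.prems by (intro map_idI del_id) (auto simp: list_all_iff)
  have m2: "map (del m) (take i ts) @ map (del m) (drop i ts) = ts"
    using m1 by (simp only: map_append[symmetric] append_take_drop_id)
  have ne: "\<forall>t\<in>set ts. t \<noteq> LNode {} []" using sat.prems by (auto simp: list_all_iff)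
  have "filter (\<lambda>t. t \<noteq> LNode {} []) (map (del m) (take i ts @ LNode {m} [] # drop i ts))
      = filter (\<lambda>t. t \<noteq> LNode {} []) (map (del m) (take i ts) @ map (del m) (drop i ts))"
    by simp
  also have "\<dots> = ts" using m2 ne by (auto intro: filter_True)
  finally show ?case using sat.prems by auto
next
  case (down L S i ts b m t')
  have tsi: "ts!i \<in> set ts" using down by simp
  have wfi: "wf_bt b (ts!i)" using down.prems tsi by (simp add: list_all_iff)
  have mi: "m \<notin> labels (ts!i)" using down.prems tsi by auto
  have IH: "del m t' = ts!i" using down.IH wfi mi by blast
  have mm: "map (del m) (ts[i:=t']) = ts"
  proof (rule nth_equalityI)
    show "length (map (del m) (ts[i:=t'])) = length ts" by simp
    fix j assume "j < length (map (del m) (ts[i:=t']))"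
    then have j: "j < length ts" by simp
    show "map (del m) (ts[i:=t']) ! j = ts ! j"
    proof (cases "j = i")
      case True then show ?thesis using j IH by simp
    next
      case False
      have "m \<notin> labels (ts!j)" "wf_bt b (ts!j)" using down.prems j by (auto simp: list_all_iff)
      then show ?thesis using j False by (simp add: del_id)
    qed
  qed
  have ne: "\<forall>t\<in>set ts. t \<noteq> LNode {} []" using down.prems by (auto simp: list_all_iff)
  have f: "filter (\<lambda>t. t \<noteq> LNode {} []) (map (del m) (ts[i:=t'])) = ts"
    using mm ne by (auto intro: filter_True)
  then show ?case using down.prems down.hyps by auto
qed

lemma ins_T_unique:
  "ins_at b m u T1 T' \<Longrightarrow> ins_at b m v T2 T' \<Longrightarrow> wf_bt b T1 \<Longrightarrow> wf_bt b T2 \<Longrightarrow>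
   m \<notin> labels T1 \<Longrightarrow> m \<notin> labels T2 \<Longrightarrow> T1 = T2"
  using del_ins by metis

lemma ins_u_unique: "ins_at b m u T T' \<Longrightarrow> m \<notin> labels T \<Longrightarrow> ins_at b m v T T' \<Longrightarrow> u = v"
proof (induction arbitrary: v rule: ins_at.induct)
  case (unsat L b m ts)
  from unsat.prems(2) show ?case
  proof (cases rule: ins_at.cases)
    case unsat then show ?thesis by simp
  next
    case (sat i) then show ?thesis using unsat.prems(1) by auto
  next
    case (down i t') then show ?thesis using unsat.prems(1) by auto
  qed
next
  case (sat L b i ts m)
  from sat.prems(2) show ?case
  proof (cases rule: ins_at.cases)
    case unsat then show ?thesis using sat.prems(1) by auto
  next
    case (sat i) then show ?thesis by simp
  next
    case (down j t')
    then have "length (ts[j:=t']) = length (take i ts @ LNode {m} [] # drop i ts)" by simp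
    then show ?thesis using sat.hyps by simp
  qed
next
  case (down L S i ts b m t1)
  have mi: "m \<notin> labels (ts!i)" using down.prems(1) down.hyps(2) by auto
  from down.prems(2) show ?case
  proof (cases rule: ins_at.cases)
    case unsat then show ?thesis using down.prems(1) by auto
  next
    case (sat j)
    then have e: "ts[i:=t1] = take j ts @ LNode {m} [] # drop j ts" and jl: "j \<le> length ts" by simp_all
    have "length (ts[i:=t1]) = length (take j ts @ LNode {m} [] # drop j ts)" using e by (rule arg_cong)
    then have False using jl by simp
    then show ?thesis by simp
  next
    case (down j t2)
    then have eq: "ts[i:=t1] = ts[j:=t2]" by simp
    show ?thesis
    proof (cases "i = j")
      case True
      then have "t1 = t2" using eq down.hyps(2) by (metis nth_list_update_eq)
      then show ?thesis using down.IH[OF mi] down True by simp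
    next
      case False
      then have "t1 = ts!i" using eq down.hyps(2) by (metis nth_list_update_eq nth_list_update_neq)
      moreover have "labels t1 = insert m (labels (ts!i))" using down.hyps(3) by (rule ins_labels)
      ultimately show ?thesis using mi by auto
    qed
  qed
qed


lemma prod_list_nth: "prod_list (map f xs) = (\<Prod>i<length xs. f (xs!i))"
  by (induction xs) (simp_all del: prod.lessThan_Suc add: prod.lessThan_Suc_shift)

lemma sum_list_nth: "sum_list (map f xs) = (\<Sum>i<length xs. f (xs!i))"
  by (induction xs) (simp_all del: sum.lessThan_Suc add: sum.lessThan_Suc_shift)

lemma prod_list_upd_map:
  assumes "i < length xs"
  shows "prod_list (map f (xs[i:=y])) = (\<Prod>k\<in>{..<length xs}-{i}. f (xs!k)) * f y"
proof -
  have "prod_list (map f (xs[i:=y])) = (\<Prod>k<length xs. f ((xs[i:=y])!k))"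
    by (simp add: prod_list_nth)
  also have "\<dots> = f ((xs[i:=y])!i) * (\<Prod>k\<in>{..<length xs}-{i}. f ((xs[i:=y])!k))"
    using assms by (subst prod.remove[of _ i]) auto
  also have "(\<Prod>k\<in>{..<length xs}-{i}. f ((xs[i:=y])!k)) = (\<Prod>k\<in>{..<length xs}-{i}. f (xs!k))"
    by (rule prod.cong) auto
  finally show ?thesis using assms by (simp add: mult.commute)
qed

lemma prod_list_map_nth:
  assumes "i < length xs"
  shows "prod_list (map f xs) = (\<Prod>k\<in>{..<length xs}-{i}. f (xs!k)) * f (xs!i)"
  using prod_list_upd_map[OF assms, of f "xs!i"] by simp

lemma succ_root_unsat:
  "card L < b \<Longrightarrow> {T'. ins_at b m L (LNode L ts) T'} = {LNode (insert m L) ts}"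
  by (auto elim: ins_at.cases intro: ins_at.unsat)

lemma succ_root_sat:
  "card L = b \<Longrightarrow> {T'. ins_at b m L (LNode L ts) T'} =
     (\<lambda>i. LNode L (take i ts @ LNode {m} [] # drop i ts)) ` {0..length ts}"
  by (auto elim: ins_at.cases intro: ins_at.sat)

lemma succ_down:
  assumes "L \<noteq> v" "i0 < length ts" "\<And>i. i < length ts \<Longrightarrow> v \<in> buckets (ts!i) \<Longrightarrow> i = i0"
  shows "{T'. ins_at b m v (LNode L ts) T'} = (\<lambda>t'. LNode L (ts[i0:=t'])) ` {t'. ins_at b m v (ts!i0) t'}"
proof
  show "{T'. ins_at b m v (LNode L ts) T'} \<subseteq> (\<lambda>t'. LNode L (ts[i0:=t'])) ` {t'. ins_at b m v (ts!i0) t'}"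
  proof
    fix T' assume "T' \<in> {T'. ins_at b m v (LNode L ts) T'}"
    then have "ins_at b m v (LNode L ts) T'" by simp
    then show "T' \<in> (\<lambda>t'. LNode L (ts[i0:=t'])) ` {t'. ins_at b m v (ts!i0) t'}"
    proof (cases rule: ins_at.cases)
      case unsat then show ?thesis using assms(1) by simp
    next
      case (sat i) then show ?thesis using assms(1) by simp
    next
      case (down i t')
      then have "v \<in> buckets (ts!i)" using ins_at_bucket by blast
      then have "i = i0" using assms(3) down by simp
      then show ?thesis using down by auto
    qed
  qed
next
  show "(\<lambda>t'. LNode L (ts[i0:=t'])) ` {t'. ins_at b m v (ts!i0) t'} \<subseteq> {T'. ins_at b m v (LNode L ts) T'}"
    using assms(1,2) by (auto intro: ins_at.down)
qed

lemma inj_ins_pos: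
  assumes "x \<notin> set ts"
  shows "inj_on (\<lambda>i. take i ts @ x # drop i ts) {0..length ts}"
proof (rule inj_onI)
  fix i j assume i: "i \<in> {0..length ts}" and j: "j \<in> {0..length ts}"
    and e: "take i ts @ x # drop i ts = take j ts @ x # drop j ts"
  have ni: "(take i ts @ x # drop i ts) ! i = x" using i by (simp add: nth_append)
  have nj: "(take j ts @ x # drop j ts) ! j = x" using j by (simp add: nth_append)
  show "i = j"
  proof (rule ccontr)
    assume "i \<noteq> j"
    then consider "i < j" | "j < i" by linarith
    then show False
    proof cases
      case 1
      then have "(take j ts @ x # drop j ts) ! i = ts ! i" using j by (simp add: nth_append)
      moreover have "ts ! i \<in> set ts" using 1 j by simp
      ultimately show False using ni e assms by simp
    next
      case 2
      then have "(take i ts @ x # drop i ts) ! j = ts ! j" using i by (simp add: nth_append)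
      moreover have "ts ! j \<in> set ts" using 2 i by simp
      ultimately show False using nj e assms by simp
    qed
  qed
qed

lemma bdeg_child:
  assumes "dj (LNode L ts)" "wf_bt b (LNode L ts)" "j < length ts" "v \<in> buckets (ts!j)"
  shows "bdeg (LNode L ts) v = bdeg (ts!j) v"
proof -
  have Lv: "L \<noteq> v" using dj_root_notin[OF assms(1,2,3)] assms(4) by blast
  have "bdeg (LNode L ts) v = (\<Sum>k<length ts. bdeg (ts!k) v)" using Lv by (simp add: sum_list_nth)
  also have "\<dots> = bdeg (ts!j) v + (\<Sum>k\<in>{..<length ts}-{j}. bdeg (ts!k) v)"
    using assms(3) by (subst sum.remove[of _ j]) auto
  also have "(\<Sum>k\<in>{..<length ts}-{j}. bdeg (ts!k) v) = 0"
  proof (rule sum.neutral, intro ballI)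
    fix k assume k: "k \<in> {..<length ts}-{j}"
    then have "v \<notin> buckets (ts!k)" using dj_child_unique[OF assms(1,2)] assms(3,4) by blast
    then show "bdeg (ts!k) v = 0" by (rule bdeg_notin)
  qed
  finally show ?thesis by simp
qed

primrec tsum :: "(nat set \<Rightarrow> nat \<Rightarrow> real) \<Rightarrow> ltree \<Rightarrow> real" where
  "tsum f (LNode L ts) = f L (length ts) + sum_list (map (tsum f) ts)"

lemma set_nth_image: "set ts = (\<lambda>k. ts!k) ` {..<length ts}"
  by (auto simp: in_set_conv_nth image_iff)

lemma buckets_node: "buckets (LNode L ts) = insert L (\<Union>k\<in>{..<length ts}. buckets (ts!k))"
proof -
  have "buckets (LNode L ts) = insert L (\<Union>(buckets ` set ts))" by simp
  also have "set ts = (\<lambda>k. ts!k) ` {..<length ts}" by (rule set_nth_image)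
  finally show ?thesis by (simp add: image_image)
qed

lemma bucket_sum: "wf_bt b T \<Longrightarrow> dj T \<Longrightarrow> (\<Sum>v\<in>buckets T. f v (bdeg T v)) = tsum f T"
proof (induction T)
  case (LNode L ts)
  let ?T = "LNode L ts"
  have wfk: "\<And>k. k < length ts \<Longrightarrow> wf_bt b (ts!k) \<and> dj (ts!k)" using LNode.prems by (auto simp: list_all_iff)
  have IH: "\<And>k. k < length ts \<Longrightarrow> (\<Sum>v\<in>buckets (ts!k). f v (bdeg (ts!k) v)) = tsum f (ts!k)"
    using LNode.IH wfk by simp
  have Lnot: "L \<notin> (\<Union>k\<in>{..<length ts}. buckets (ts!k))" using dj_root_notin[OF LNode.prems(2,1)] by blast
  have "(\<Sum>v\<in>buckets ?T. f v (bdeg ?T v)) = f L (bdeg ?T L) + (\<Sum>v\<in>(\<Union>k\<in>{..<length ts}. buckets (ts!k)). f v (bdeg ?T v))"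
    using Lnot by (simp only: buckets_node) (rule sum.insert, auto intro: finite_buckets)
  also have "(\<Sum>v\<in>(\<Union>k\<in>{..<length ts}. buckets (ts!k)). f v (bdeg ?T v)) = (\<Sum>k<length ts. \<Sum>v\<in>buckets (ts!k). f v (bdeg ?T v))"
  proof (rule sum.UNION_disjoint)
    show "\<forall>i\<in>{..<length ts}. \<forall>j\<in>{..<length ts}. i \<noteq> j \<longrightarrow> buckets (ts!i) \<inter> buckets (ts!j) = {}"
      using dj_child_unique[OF LNode.prems(2,1)] by blast
  qed (auto intro: finite_buckets)
  also have "\<dots> = (\<Sum>k<length ts. tsum f (ts!k))"
  proof (rule sum.cong)
    fix k assume k: "k \<in> {..<length ts}"
    have "(\<Sum>v\<in>buckets (ts!k). f v (bdeg ?T v)) = (\<Sum>v\<in>buckets (ts!k). f v (bdeg (ts!k) v))"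
      using bdeg_child[OF LNode.prems(2,1)] k by (intro sum.cong) auto
    then show "(\<Sum>v\<in>buckets (ts!k). f v (bdeg ?T v)) = tsum f (ts!k)" using IH k by simp
  qed simp
  finally show ?case by (simp add: sum_list_nth)
qed

lemma tsum_lin: "tsum (\<lambda>v k. a * real (card v) + c * (1 - real k)) T = a * real (tsize T) + c"
proof (induction T)
  case (LNode L ts)
  have "sum_list (map (tsum (\<lambda>v k. a * real (card v) + c * (1 - real k))) ts)
      = (\<Sum>i<length ts. a * real (tsize (ts!i)) + c)"
    using LNode.IH by (simp add: sum_list_nth)
  also have "\<dots> = a * (\<Sum>i<length ts. real (tsize (ts!i))) + c * real (length ts)"
    by (simp add: sum.distrib sum_distrib_left)
  finally have e: "sum_list (map (tsum (\<lambda>v k. a * real (card v) + c * (1 - real k))) ts)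
      = a * (\<Sum>i<length ts. real (tsize (ts!i))) + c * real (length ts)" .
  have t: "real (tsize (LNode L ts)) = real (card L) + (\<Sum>i<length ts. real (tsize (ts!i)))"
    by (simp add: sum_list_nth)
  show ?case using e t by (simp add: algebra_simps)
qed

lemma OT_wf: "T \<in> OT b n \<Longrightarrow> wf_bt b T \<and> incr T \<and> tsize T = n \<and> labels T = {1..n}"
  by (simp add: OT_def)

lemma OT_0: "OT b 0 = {}"
proof -
  have "T \<notin> OT b 0" for T
  proof
    assume "T \<in> OT b 0"
    then have "wf_bt b T" "labels T = {}" by (auto simp: OT_def)
    then show False using wf_labels_ne by blast
  qed
  then show ?thesis by blast
qed

lemma OT_1: "1 \<le> b \<Longrightarrow> OT b 1 = {LNode {1} []}"
proof
  assume b: "1 \<le> b"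
  show "{LNode {1} []} \<subseteq> OT b 1" using b by (simp add: OT_def)
  show "OT b 1 \<subseteq> {LNode {1} []}"
  proof
    fix T assume T: "T \<in> OT b 1"
    obtain L ts where Tt: "T = LNode L ts" by (cases T)
    have wf: "wf_bt b (LNode L ts)" and sz: "tsize (LNode L ts) = 1" and lb: "labels (LNode L ts) = {1}"
      using T Tt by (auto simp: OT_def)
    have c1: "1 \<le> card L" using wf by simp
    have "ts = []"
    proof (rule ccontr)
      assume "ts \<noteq> []" then obtain t ts' where "ts = t # ts'" by (cases ts) auto
      moreover have "wf_bt b t" using wf \<open>ts = t # ts'\<close> by simp
      then have "1 \<le> tsize t" by (cases t) auto
      ultimately show False using sz c1 by simp
    qed
    then have "L = {1}" using lb c1 by auto
    then show "T \<in> {LNode {1} []}" using Tt \<open>ts = []\<close> by simp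
  qed
qed

lemma OT_succ:
  assumes "T \<in> OT b n" "ins_at b (Suc n) u T T'" "1 \<le> b"
  shows "T' \<in> OT b (Suc n)"
proof -
  have T: "wf_bt b T" "incr T" "tsize T = n" "labels T = {1..n}" using assms(1) OT_wf by blast+
  have "Suc n \<notin> labels T" using T by simp
  note P = ins_at_props[OF assms(2) T(1) this assms(3)]
  have "\<forall>x\<in>labels T. x < Suc n" using T by auto
  then show ?thesis using P T by (auto simp: OT_def)
qed

lemma OT_pred:
  assumes "T' \<in> OT b (Suc n)" "1 \<le> n" "1 \<le> b"
  shows "\<exists>T\<in>OT b n. \<exists>u. ins_at b (Suc n) u T T'"
proof -
  have T': "wf_bt b T'" "incr T'" "tsize T' = Suc n" "labels T' = {1..Suc n}" using assms(1) OT_wf by blast+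
  have djT': "dj T'" using assms(1) by (rule OT_dj)
  have "1 \<in> labels T'" using T'(4) by simp
  have "labels T' \<noteq> {Suc n}"
  proof
    assume "labels T' = {Suc n}"
    then show False using \<open>1 \<in> labels T'\<close> assms(2) by simp
  qed
  moreover have "Suc n \<in> labels T'" "\<forall>x\<in>labels T'. x \<le> Suc n" using T'(4) by simp_all
  ultimately obtain T u where Tu: "ins_at b (Suc n) u T T'" "wf_bt b T" "incr T" "labels T = labels T' - {Suc n}"
    using pred_exists[OF T'(1,2) djT'] by blast
  have "Suc n \<notin> labels T" using Tu(4) by simp
  note P = ins_at_props[OF Tu(1) Tu(2) this assms(3)]
  have s: "tsize T = n" using P T'(3) by simp
  have l: "labels T = {1..n}" using Tu(4) T'(4) by auto
  have "T \<in> OT b n" unfolding OT_def using Tu(2,3) s l by simp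
  then show ?thesis using Tu(1) by blast
qed

definition succs :: "nat \<Rightarrow> nat \<Rightarrow> nat set \<Rightarrow> ltree \<Rightarrow> ltree set" where
  "succs b m v T = {T'. ins_at b m v T T'}"

lemma OT_Suc_eq:
  assumes "1 \<le> n" "1 \<le> b"
  shows "OT b (Suc n) = (\<Union>T\<in>OT b n. \<Union>v\<in>buckets T. succs b (Suc n) v T)"
proof
  show "OT b (Suc n) \<subseteq> (\<Union>T\<in>OT b n. \<Union>v\<in>buckets T. succs b (Suc n) v T)"
  proof
    fix T' assume "T' \<in> OT b (Suc n)"
    then obtain T u where "T \<in> OT b n" "ins_at b (Suc n) u T T'" using OT_pred assms by blast
    moreover then have "u \<in> buckets T" by (simp add: ins_at_bucket)
    ultimately show "T' \<in> (\<Union>T\<in>OT b n. \<Union>v\<in>buckets T. succs b (Suc n) v T)" by (auto simp: succs_def)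
  qed
  show "(\<Union>T\<in>OT b n. \<Union>v\<in>buckets T. succs b (Suc n) v T) \<subseteq> OT b (Suc n)"
    using OT_succ assms(2) by (auto simp: succs_def)
qed

lemma succs_disj_v:
  assumes "T \<in> OT b n" "u \<noteq> v"
  shows "succs b (Suc n) u T \<inter> succs b (Suc n) v T = {}"
proof -
  have "Suc n \<notin> labels T" using assms(1) OT_wf by fastforce
  show ?thesis
  proof (rule ccontr)
    assume "succs b (Suc n) u T \<inter> succs b (Suc n) v T \<noteq> {}"
    then obtain T' where "ins_at b (Suc n) u T T'" "ins_at b (Suc n) v T T'" by (auto simp: succs_def)
    then have "u = v" using ins_u_unique \<open>Suc n \<notin> labels T\<close> by blast
    then show False using assms(2) by simp
  qed
qed

lemma succs_disj_T:
  assumes "T1 \<in> OT b n" "T2 \<in> OT b n" "T1 \<noteq> T2"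
  shows "(\<Union>v\<in>buckets T1. succs b (Suc n) v T1) \<inter> (\<Union>v\<in>buckets T2. succs b (Suc n) v T2) = {}"
proof -
  have "Suc n \<notin> labels T1" "Suc n \<notin> labels T2" "wf_bt b T1" "wf_bt b T2" using assms OT_wf by fastforce+
  then show ?thesis using ins_T_unique assms(3) unfolding succs_def by blast
qed


declare weight.simps[simp del]



locale bmodel =
  fixes \<phi> \<psi> :: "nat \<Rightarrow> real" and b :: nat and a \<beta> :: real
  assumes b1: "1 \<le> b"
  and rU: "\<And>c. 1 \<le> c \<Longrightarrow> c < b \<Longrightarrow> nw \<phi> \<psi> b (Suc c) 0 = nw \<phi> \<psi> b c 0 * (a * real c + \<beta>)"
  and rS: "\<And>k. real (Suc k) * \<phi> (Suc k) * nw \<phi> \<psi> b 1 0 = \<phi> k * (a * real b + \<beta> * (1 - real k))"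
  and Dpos: "\<And>n. 1 \<le> n \<Longrightarrow> a * real n + \<beta> > 0"
  and nw1: "nw \<phi> \<psi> b 1 0 = 1"
begin

definition q :: "nat \<Rightarrow> nat \<Rightarrow> real" where "q c k = a * real c + \<beta> * (1 - real k)"

lemma succ_weight:
  "wf_bt b T \<Longrightarrow> dj T \<Longrightarrow> m \<notin> labels T \<Longrightarrow> v \<in> buckets T \<Longrightarrow>
   finite (succs b m v T) \<and> (\<Sum>T'\<in>succs b m v T. weight \<phi> \<psi> b T') = weight \<phi> \<psi> b T * q (card v) (bdeg T v)"
proof (induction T)
  case (LNode L ts)
  show ?case
  proof (cases "L = v")
    case Lv: True
    have c1: "1 \<le> card L" "card L \<le> b" and ne: "ts \<noteq> [] \<longrightarrow> card L = b" using LNode.prems(1) by auto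
    have bd: "bdeg (LNode L ts) v = length ts" using Lv by simp
    show ?thesis
    proof (cases "card L < b")
      case True
      then have ts: "ts = []" using ne by auto
      have fL: "finite L" using c1 by (intro card_ge_0_finite) simp
      have mL: "m \<notin> L" using LNode.prems(3) by simp
      have S: "succs b m v (LNode L ts) = {LNode (insert m L) ts}"
        using succ_root_unsat[OF True] Lv by (simp add: succs_def)
      have "weight \<phi> \<psi> b (LNode (insert m L) []) = nw \<phi> \<psi> b (Suc (card L)) 0"
        using fL mL by (simp add: weight_nw)
      also have "\<dots> = nw \<phi> \<psi> b (card L) 0 * (a * real (card L) + \<beta>)" by (rule rU[OF c1(1) True])
      also have "\<dots> = weight \<phi> \<psi> b (LNode L []) * q (card L) 0" by (simp add: weight_nw q_def)
      finally show ?thesis using S ts bd Lv by simp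
    next
      case False
      then have cb: "card L = b" using c1 by simp
      let ?x = "LNode {m} []"
      let ?g = "\<lambda>i. LNode L (take i ts @ ?x # drop i ts)"
      have S: "succs b m v (LNode L ts) = ?g ` {0..length ts}"
        using succ_root_sat[OF cb] Lv by (simp add: succs_def)
      have xn: "?x \<notin> set ts"
      proof
        assume "?x \<in> set ts"
        then have "m \<in> labels (LNode L ts)" by force
        then show False using LNode.prems(3) by simp
      qed
      have inj: "inj_on ?g {0..length ts}"
      proof (rule inj_onI)
        fix i j assume i: "i \<in> {0..length ts}" and j: "j \<in> {0..length ts}" and e: "?g i = ?g j"
        from e have "take i ts @ ?x # drop i ts = take j ts @ ?x # drop j ts" by simp
        then show "i = j" using inj_onD[OF inj_ins_pos[OF xn] _ i j] by blast
      qed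
      have wx: "weight \<phi> \<psi> b ?x = 1" using nw1 by (simp add: weight_nw)
      let ?P = "prod_list (map (weight \<phi> \<psi> b) ts)"
      have wg: "weight \<phi> \<psi> b (?g i) = \<phi> (Suc (length ts)) * ?P" if i: "i \<in> {0..length ts}" for i
      proof -
        have len: "length (take i ts @ ?x # drop i ts) = Suc (length ts)" using i by simp
        have "prod_list (map (weight \<phi> \<psi> b) (take i ts @ ?x # drop i ts)) =
              prod_list (map (weight \<phi> \<psi> b) (take i ts)) * prod_list (map (weight \<phi> \<psi> b) (drop i ts))"
          using wx by simp
        also have "\<dots> = ?P" by (rule prod_list_take_drop)
        finally show ?thesis using len cb by (simp add: weight_nw nw_def)
      qed
      have "(\<Sum>T'\<in>succs b m v (LNode L ts). weight \<phi> \<psi> b T') = (\<Sum>i\<in>{0..length ts}. weight \<phi> \<psi> b (?g i))"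
        using S inj by (simp add: sum.reindex)
      also have "\<dots> = (\<Sum>i\<in>{0..length ts}. \<phi> (Suc (length ts)) * ?P)" using wg by (rule sum.cong[OF refl])
      also have "\<dots> = real (Suc (length ts)) * \<phi> (Suc (length ts)) * ?P" by simp
      also have "\<dots> = \<phi> (length ts) * q b (length ts) * ?P" using rS[of "length ts"] nw1 by (simp add: q_def)
      also have "\<dots> = weight \<phi> \<psi> b (LNode L ts) * q (card v) (bdeg (LNode L ts) v)"
        using cb bd Lv by (simp add: weight_nw nw_def)
      finally show ?thesis using S by simp
    qed
  next
    case False
    have "v \<in> insert L (\<Union>k\<in>{..<length ts}. buckets (ts!k))"
      using LNode.prems(4) by (simp only: buckets_node)
    then have "v \<in> (\<Union>k\<in>{..<length ts}. buckets (ts!k))" using False by blast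
    then obtain i0 where i0: "i0 < length ts" "v \<in> buckets (ts!i0)" by blast
    have uniq: "\<And>i. i < length ts \<Longrightarrow> v \<in> buckets (ts!i) \<Longrightarrow> i = i0"
      using dj_child_unique[OF LNode.prems(2,1)] i0 by blast
    let ?h = "\<lambda>t'. LNode L (ts[i0:=t'])"
    have S: "succs b m v (LNode L ts) = ?h ` succs b m v (ts!i0)"
      using succ_down[OF False i0(1) uniq] by (simp add: succs_def)
    have tsi: "ts!i0 \<in> set ts" using i0 by simp
    have IH: "finite (succs b m v (ts!i0)) \<and> (\<Sum>T'\<in>succs b m v (ts!i0). weight \<phi> \<psi> b T') = weight \<phi> \<psi> b (ts!i0) * q (card v) (bdeg (ts!i0) v)"
    proof (rule LNode.IH[OF tsi])
      show "wf_bt b (ts!i0)" "dj (ts!i0)" using LNode.prems(1,2) tsi by (auto simp: list_all_iff)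
      show "m \<notin> labels (ts!i0)" using LNode.prems(3) tsi by auto
      show "v \<in> buckets (ts!i0)" by (rule i0(2))
    qed
    have inj: "inj_on ?h (succs b m v (ts!i0))"
    proof (rule inj_onI)
      fix x y assume "?h x = ?h y"
      then have "(ts[i0:=x])!i0 = (ts[i0:=y])!i0" by simp
      then show "x = y" using i0 by simp
    qed
    let ?R = "\<Prod>k\<in>{..<length ts}-{i0}. weight \<phi> \<psi> b (ts!k)"
    let ?N = "nw \<phi> \<psi> b (card L) (length ts)"
    have wh: "weight \<phi> \<psi> b (?h t') = ?N * ?R * weight \<phi> \<psi> b t'" for t'
      using prod_list_upd_map[OF i0(1), of "weight \<phi> \<psi> b" t'] by (simp add: weight_nw mult.assoc)
    have wT: "weight \<phi> \<psi> b (LNode L ts) = ?N * ?R * weight \<phi> \<psi> b (ts!i0)"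
      using prod_list_map_nth[OF i0(1), of "weight \<phi> \<psi> b"] by (simp add: weight_nw mult.assoc)
    have bd: "bdeg (LNode L ts) v = bdeg (ts!i0) v" using bdeg_child[OF LNode.prems(2,1) i0] .
    have "(\<Sum>T'\<in>succs b m v (LNode L ts). weight \<phi> \<psi> b T') = (\<Sum>t'\<in>succs b m v (ts!i0). weight \<phi> \<psi> b (?h t'))"
      using S inj by (simp add: sum.reindex)
    also have "\<dots> = ?N * ?R * (\<Sum>t'\<in>succs b m v (ts!i0). weight \<phi> \<psi> b t')"
      by (simp add: wh sum_distrib_left)
    also have "\<dots> = weight \<phi> \<psi> b (LNode L ts) * q (card v) (bdeg (LNode L ts) v)"
      using IH wT bd by simp
    finally show ?thesis using S IH by simp
  qed
qed

lemma OT_succ_weight: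
  assumes "T \<in> OT b n" "v \<in> buckets T"
  shows "finite (succs b (Suc n) v T)"
    "(\<Sum>T'\<in>succs b (Suc n) v T. weight \<phi> \<psi> b T') = weight \<phi> \<psi> b T * q (card v) (bdeg T v)"
proof -
  have "wf_bt b T" "dj T" "Suc n \<notin> labels T" using assms(1) OT_wf OT_dj by fastforce+
  then show "finite (succs b (Suc n) v T)"
    "(\<Sum>T'\<in>succs b (Suc n) v T. weight \<phi> \<psi> b T') = weight \<phi> \<psi> b T * q (card v) (bdeg T v)"
    using succ_weight assms(2) by blast+
qed

lemma OT_finite: "finite (OT b n)"
proof (induction n rule: nat_less_induct)
  case (1 n)
  show ?case
  proof (cases n)
    case 0 then show ?thesis by (simp add: OT_0)
  next
    case (Suc k)
    show ?thesis
    proof (cases k)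
      case 0 then show ?thesis using Suc OT_1[OF b1] by simp
    next
      case (Suc j)
      have fk: "finite (OT b k)" using 1 \<open>n = Suc k\<close> by simp
      have "OT b n = (\<Union>T\<in>OT b k. \<Union>v\<in>buckets T. succs b (Suc k) v T)"
        using OT_Suc_eq[of k b] b1 Suc \<open>n = Suc k\<close> by simp
      moreover have "finite (\<Union>T\<in>OT b k. \<Union>v\<in>buckets T. succs b (Suc k) v T)"
        using fk finite_buckets OT_succ_weight(1) by blast
      ultimately show ?thesis by simp
    qed
  qed
qed

lemma OT_sum:
  assumes "1 \<le> n"
  shows "(\<Sum>T'\<in>OT b (Suc n). f T') = (\<Sum>T\<in>OT b n. \<Sum>v\<in>buckets T. \<Sum>T'\<in>succs b (Suc n) v T. f T')"
proof -
  have "(\<Sum>T'\<in>OT b (Suc n). f T') = (\<Sum>T'\<in>(\<Union>T\<in>OT b n. \<Union>v\<in>buckets T. succs b (Suc n) v T). f T')"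
    using OT_Suc_eq[OF assms b1] by simp
  also have "\<dots> = (\<Sum>T\<in>OT b n. \<Sum>T'\<in>(\<Union>v\<in>buckets T. succs b (Suc n) v T). f T')"
  proof (rule sum.UNION_disjoint)
    show "finite (OT b n)" by (rule OT_finite)
    show "\<forall>T\<in>OT b n. finite (\<Union>v\<in>buckets T. succs b (Suc n) v T)"
      using finite_buckets OT_succ_weight(1) by blast
    show "\<forall>T1\<in>OT b n. \<forall>T2\<in>OT b n. T1 \<noteq> T2 \<longrightarrow>
      (\<Union>v\<in>buckets T1. succs b (Suc n) v T1) \<inter> (\<Union>v\<in>buckets T2. succs b (Suc n) v T2) = {}"
      using succs_disj_T by blast
  qed
  also have "\<dots> = (\<Sum>T\<in>OT b n. \<Sum>v\<in>buckets T. \<Sum>T'\<in>succs b (Suc n) v T. f T')"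
  proof (rule sum.cong[OF refl])
    fix T assume T: "T \<in> OT b n"
    show "(\<Sum>T'\<in>(\<Union>v\<in>buckets T. succs b (Suc n) v T). f T') = (\<Sum>v\<in>buckets T. \<Sum>T'\<in>succs b (Suc n) v T. f T')"
    proof (rule sum.UNION_disjoint)
      show "finite (buckets T)" by (rule finite_buckets)
      show "\<forall>v\<in>buckets T. finite (succs b (Suc n) v T)" using OT_succ_weight(1) T by blast
      show "\<forall>u\<in>buckets T. \<forall>v\<in>buckets T. u \<noteq> v \<longrightarrow> succs b (Suc n) u T \<inter> succs b (Suc n) v T = {}"
        using succs_disj_v T by blast
    qed
  qed
  finally show ?thesis .
qed

lemma q_sum:
  assumes "T \<in> OT b n"
  shows "(\<Sum>v\<in>buckets T. q (card v) (bdeg T v)) = a * real n + \<beta>"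
proof -
  have "wf_bt b T" "dj T" "tsize T = n" using assms OT_wf OT_dj by fastforce+
  then show ?thesis
    using bucket_sum[of b T "\<lambda>v k. a * real (card v) + \<beta> * (1 - real k)"] tsum_lin[of a \<beta> T]
    by (simp add: q_def)
qed

lemma succ_total:
  assumes "T \<in> OT b n"
  shows "(\<Sum>v\<in>buckets T. \<Sum>T'\<in>succs b (Suc n) v T. weight \<phi> \<psi> b T') = weight \<phi> \<psi> b T * (a * real n + \<beta>)"
proof -
  have "(\<Sum>v\<in>buckets T. \<Sum>T'\<in>succs b (Suc n) v T. weight \<phi> \<psi> b T') = (\<Sum>v\<in>buckets T. weight \<phi> \<psi> b T * q (card v) (bdeg T v))"
    using OT_succ_weight(2)[OF assms] by simp
  also have "\<dots> = weight \<phi> \<psi> b T * (a * real n + \<beta>)"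
    by (simp only: sum_distrib_left[symmetric] q_sum[OF assms])
  finally show ?thesis .
qed

lemma Tn_Suc: "1 \<le> n \<Longrightarrow> Tn \<phi> \<psi> b (Suc n) = (a * real n + \<beta>) * Tn \<phi> \<psi> b n"
  unfolding Tn_def by (simp add: OT_sum succ_total sum_distrib_left sum_distrib_right mult.commute)

lemma Tn_1: "Tn \<phi> \<psi> b 1 = 1"
  unfolding Tn_def OT_1[OF b1] using nw1 by (simp add: weight_nw One_nat_def)

lemma Tn_prod: "Tn \<phi> \<psi> b (Suc n) = (\<Prod>j\<in>{1..n}. a * real j + \<beta>)"
proof (induction n)
  case 0 then show ?case using Tn_1 by simp
next
  case (Suc n)
  then show ?case by (simp add: Tn_Suc prod.cl_ivl_Suc mult.commute)
qed

lemma Tn_pos: "1 \<le> n \<Longrightarrow> Tn \<phi> \<psi> b n > 0"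
proof -
  assume "1 \<le> n"
  then obtain k where k: "n = Suc k" by (cases n) auto
  have "(\<Prod>j\<in>{1..k}. a * real j + \<beta>) > 0" using Dpos by (intro prod_pos) auto
  then show ?thesis using k Tn_prod by simp
qed

lemma pT_eq:
  assumes "T \<in> OT b n" "weight \<phi> \<psi> b T \<noteq> 0" "v \<in> buckets T"
  shows "pT \<phi> \<psi> b n T v = q (card v) (bdeg T v) / (a * real n + \<beta>)"
proof -
  have num: "(\<Sum>T'\<in>{T'. ins_at b (Suc n) v T T'}. weight \<phi> \<psi> b T') = weight \<phi> \<psi> b T * q (card v) (bdeg T v)"
    using OT_succ_weight(2)[OF assms(1,3)] by (simp add: succs_def)
  have U: "{T'. \<exists>u. ins_at b (Suc n) u T T'} = (\<Union>v\<in>buckets T. succs b (Suc n) v T)"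
    unfolding succs_def by (blast intro: ins_at_bucket)
  have "(\<Sum>T'\<in>{T'. \<exists>u. ins_at b (Suc n) u T T'}. weight \<phi> \<psi> b T') = (\<Sum>v\<in>buckets T. \<Sum>T'\<in>succs b (Suc n) v T. weight \<phi> \<psi> b T')"
    unfolding U
  proof (rule sum.UNION_disjoint)
    show "finite (buckets T)" by (rule finite_buckets)
    show "\<forall>v\<in>buckets T. finite (succs b (Suc n) v T)" using OT_succ_weight(1) assms(1) by blast
    show "\<forall>u\<in>buckets T. \<forall>v\<in>buckets T. u \<noteq> v \<longrightarrow> succs b (Suc n) u T \<inter> succs b (Suc n) v T = {}"
      using succs_disj_v assms(1) by blast
  qed
  also have "\<dots> = weight \<phi> \<psi> b T * (a * real n + \<beta>)" by (rule succ_total[OF assms(1)])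
  finally have den: "(\<Sum>T'\<in>{T'. \<exists>u. ins_at b (Suc n) u T T'}. weight \<phi> \<psi> b T') = weight \<phi> \<psi> b T * (a * real n + \<beta>)" .
  show ?thesis unfolding pT_def num den using assms(2) by simp
qed

end


lemma ubuckets_unord: "ubuckets (unord T) = buckets T"
proof (induction T)
  case (LNode L ts)
  have "ubuckets ` unord ` set ts = buckets ` set ts"
    using LNode.IH by (force simp: image_image intro: image_cong)
  then show ?case by (simp add: image_image)
qed

lemma udeg_unord: "udeg (unord T) v = bdeg T v"
proof (induction T)
  case (LNode L ts)
  have "map (\<lambda>t. udeg (unord t) v) ts = map (\<lambda>t. bdeg t v) ts"
    using LNode.IH by (intro map_cong) auto
  moreover have "image_mset (\<lambda>t. udeg t v) (image_mset unord (mset ts)) = mset (map (\<lambda>t. udeg (unord t) v) ts)"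
    by (simp only: mset_map[symmetric] map_map o_def)
  ultimately have "sum_mset (image_mset (\<lambda>t. udeg t v) (image_mset unord (mset ts))) = sum_list (map (\<lambda>t. bdeg t v) ts)"
    by (simp only: sum_mset_sum_list)
  then show ?case by simp
qed

lemma ugrow_notin: "S \<notin> ubuckets U \<Longrightarrow> ugrow b m S U = U"
proof (induction U)
  case (UNode L cs)
  have "image_mset (ugrow b m S) cs = image_mset id cs"
    using UNode by (intro image_mset_cong) auto
  moreover have "L \<noteq> S" using UNode.prems by auto
  ultimately show ?case by simp
qed

lemma unord_ins: "ins_at b m v T T' \<Longrightarrow> wf_bt b T \<Longrightarrow> dj T \<Longrightarrow> unord T' = ugrow b m v (unord T)"
proof (induction rule: ins_at.induct)
  case (unsat L b m ts) then show ?case by simp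
next
  case (sat L b i ts m)
  have "mset (map unord ts) = mset (map unord (take i ts)) + mset (map unord (drop i ts))"
    by (subst (1) append_take_drop_id[symmetric, of ts i]) (simp only: map_append mset_append)
  then show ?case using sat by (simp del: mset_map)
next
  case (down L S i ts b m t')
  have tsi: "ts!i \<in> set ts" using down by simp
  have wfi: "wf_bt b (ts!i)" "dj (ts!i)" using down.prems tsi by (auto simp: list_all_iff)
  have IH: "unord t' = ugrow b m S (unord (ts!i))" using down.IH wfi by blast
  have Si: "S \<in> buckets (ts!i)" using down.hyps(3) by (rule ins_at_bucket)
  have "map (ugrow b m S \<circ> unord) ts = map unord (ts[i:=t'])"
  proof (rule nth_equalityI)
    show "length (map (ugrow b m S \<circ> unord) ts) = length (map unord (ts[i:=t']))" by simp
    fix j assume "j < length (map (ugrow b m S \<circ> unord) ts)"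
    then have j: "j < length ts" by simp
    show "map (ugrow b m S \<circ> unord) ts ! j = map unord (ts[i:=t']) ! j"
    proof (cases "j = i")
      case True then show ?thesis using j IH by simp
    next
      case False
      have "S \<notin> buckets (ts!j)" using dj_child_unique[OF down.prems(2,1) down.hyps(2) j Si] False by blast
      then have "ugrow b m S (unord (ts!j)) = unord (ts!j)" by (simp add: ugrow_notin ubuckets_unord)
      then show ?thesis using j False by simp
    qed
  qed
  then have "image_mset (ugrow b m S) (mset (map unord ts)) = mset (map unord (ts[i:=t']))"
    by (metis mset_map map_map)
  then show ?case using down.hyps(1) by (simp del: mset_map)
qed

lemma finite_ubuckets: "finite (ubuckets U)"
  by (induction U) auto

lemma finite_reach: "finite (reach b n)"
proof (induction b n rule: reach.induct)
  case (1 b) then show ?case by simp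
next
  case (2 b) then show ?case by simp
next
  case (3 b n)
  have "reach b (Suc (Suc n)) = (\<lambda>(U, S). ugrow b (Suc (Suc n)) S U) ` (SIGMA U:reach b (Suc n). ubuckets U)"
    by auto
  moreover have "finite (SIGMA U:reach b (Suc n). ubuckets U)"
    using 3 finite_ubuckets by (intro finite_SigmaI) auto
  ultimately show ?case by simp
qed

lemma reach_OT: "1 \<le> b \<Longrightarrow> T \<in> OT b n \<Longrightarrow> unord T \<in> reach b n"
proof (induction n arbitrary: T rule: nat_less_induct)
  case (1 n)
  show ?case
  proof (cases n)
    case 0 then show ?thesis using 1 by (simp add: OT_0)
  next
    case (Suc k)
    show ?thesis
    proof (cases k)
      case 0 then show ?thesis using 1 Suc OT_1[of b] by simp
    next
      case (Suc j)
      have "T \<in> OT b (Suc k)" using 1 \<open>n = Suc k\<close> by simp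
      then obtain T0 u where T0: "T0 \<in> OT b k" "ins_at b (Suc k) u T0 T" using OT_pred[of T b k] 1 Suc by auto
      have "unord T0 \<in> reach b k" using 1 T0(1) \<open>n = Suc k\<close> by simp
      moreover have "unord T = ugrow b (Suc k) u (unord T0)"
        using unord_ins[OF T0(2)] T0(1) OT_wf OT_dj by blast
      moreover have "u \<in> ubuckets (unord T0)" using ins_at_bucket[OF T0(2)] by (simp add: ubuckets_unord)
      ultimately show ?thesis using \<open>n = Suc k\<close> Suc by auto
    qed
  qed
qed

context bmodel
begin

lemma laws:
  assumes p_eq: "\<And>n c k. p n c k = q c k / (a * real n + \<beta>)"
  shows "gp_law b p (Suc k) U = rt_law \<phi> \<psi> b (Suc k) U"
proof (induction k arbitrary: U)
  case 0
  have "rt_law \<phi> \<psi> b (Suc 0) U = (if unord (LNode {1} []) = U then weight \<phi> \<psi> b (LNode {1} []) else 0)"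
    using Tn_1 OT_1[OF b1] by (simp add: rt_law_def)
  also have "\<dots> = (if U = UNode {1} {#} then 1 else 0)" using nw1 by (auto simp: weight_nw One_nat_def)
  finally show ?case by simp
next
  case (Suc k)
  define n where "n = Suc k"
  have n1: "1 \<le> n" by (simp add: n_def)
  let ?w = "weight \<phi> \<psi> b"
  let ?D = "a * real n + \<beta>"
  have Dp: "?D > 0" using Dpos n1 by simp
  define X where "X U U' = (\<Sum>S\<in>ubuckets U. if ugrow b (Suc n) S U = U' then p n (card S) (udeg U S) else 0)" for U U'
  have "gp_law b p (Suc n) U = (\<Sum>V\<in>reach b n. gp_law b p n V * X V U)"
    unfolding X_def n_def by simp
  also have "\<dots> = (\<Sum>V\<in>reach b n. rt_law \<phi> \<psi> b n V * X V U)" using Suc.IH by (simp add: n_def)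
  also have "\<dots> = (\<Sum>V\<in>reach b n. (\<Sum>T\<in>OT b n. (if unord T = V then ?w T * X V U else 0)) / Tn \<phi> \<psi> b n)"
  proof (rule sum.cong[OF refl])
    fix V
    show "rt_law \<phi> \<psi> b n V * X V U = (\<Sum>T\<in>OT b n. (if unord T = V then ?w T * X V U else 0)) / Tn \<phi> \<psi> b n"
      unfolding rt_law_def times_divide_eq_left sum_distrib_right
      by (rule arg_cong[where f = "\<lambda>s. s / Tn \<phi> \<psi> b n"], rule sum.cong) auto
  qed
  also have "\<dots> = (\<Sum>V\<in>reach b n. \<Sum>T\<in>OT b n. (if unord T = V then ?w T * X V U else 0)) / Tn \<phi> \<psi> b n"
    by (simp only: sum_divide_distrib)
  also have "(\<Sum>V\<in>reach b n. \<Sum>T\<in>OT b n. (if unord T = V then ?w T * X V U else 0))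
      = (\<Sum>T\<in>OT b n. \<Sum>V\<in>reach b n. (if unord T = V then ?w T * X V U else 0))"
    by (rule sum.swap)
  also have "\<dots> = (\<Sum>T\<in>OT b n. ?w T * X (unord T) U)"
  proof (rule sum.cong[OF refl])
    fix T assume "T \<in> OT b n"
    then have "unord T \<in> reach b n" using reach_OT b1 by blast
    then show "(\<Sum>V\<in>reach b n. (if unord T = V then ?w T * X V U else 0)) = ?w T * X (unord T) U"
      using finite_reach by (simp add: sum.delta)
  qed
  also have "\<dots> = (\<Sum>T\<in>OT b n. (\<Sum>v\<in>buckets T. \<Sum>T'\<in>succs b (Suc n) v T. if unord T' = U then ?w T' else 0) / ?D)"
  proof (rule sum.cong[OF refl])
    fix T assume T: "T \<in> OT b n"
    have wd: "wf_bt b T" "dj T" using T OT_wf OT_dj by blast+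
    have "?w T * X (unord T) U = (\<Sum>v\<in>buckets T. if ugrow b (Suc n) v (unord T) = U then ?w T * q (card v) (bdeg T v) / ?D else 0)"
      unfolding X_def ubuckets_unord sum_distrib_left
    proof (rule sum.cong[OF refl])
      fix v assume "v \<in> buckets T"
      have "p n (card v) (udeg (unord T) v) = q (card v) (bdeg T v) / ?D"
        using p_eq[of n "card v" "udeg (unord T) v"] udeg_unord[of T v] by simp
      then show "?w T * (if ugrow b (Suc n) v (unord T) = U then p n (card v) (udeg (unord T) v) else 0) =
        (if ugrow b (Suc n) v (unord T) = U then ?w T * q (card v) (bdeg T v) / ?D else 0)" by simp
    qed
    also have "\<dots> = (\<Sum>v\<in>buckets T. (\<Sum>T'\<in>succs b (Suc n) v T. if unord T' = U then ?w T' else 0) / ?D)"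
    proof (rule sum.cong[OF refl])
      fix v assume v: "v \<in> buckets T"
      have "(\<Sum>T'\<in>succs b (Suc n) v T. if unord T' = U then ?w T' else 0)
          = (\<Sum>T'\<in>succs b (Suc n) v T. if ugrow b (Suc n) v (unord T) = U then ?w T' else 0)"
      proof (rule sum.cong[OF refl])
        fix T' assume "T' \<in> succs b (Suc n) v T"
        then have "unord T' = ugrow b (Suc n) v (unord T)" using unord_ins wd by (simp add: succs_def)
        then show "(if unord T' = U then ?w T' else 0) = (if ugrow b (Suc n) v (unord T) = U then ?w T' else 0)"
          by simp
      qed
      also have "\<dots> = (if ugrow b (Suc n) v (unord T) = U then ?w T * q (card v) (bdeg T v) else 0)"
        using OT_succ_weight(2)[OF T v] by simp
      finally show "(if ugrow b (Suc n) v (unord T) = U then ?w T * q (card v) (bdeg T v) / ?D else 0)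
          = (\<Sum>T'\<in>succs b (Suc n) v T. if unord T' = U then ?w T' else 0) / ?D" by simp
    qed
    also have "\<dots> = (\<Sum>v\<in>buckets T. \<Sum>T'\<in>succs b (Suc n) v T. if unord T' = U then ?w T' else 0) / ?D"
      by (simp add: sum_divide_distrib)
    finally show "?w T * X (unord T) U = (\<Sum>v\<in>buckets T. \<Sum>T'\<in>succs b (Suc n) v T. if unord T' = U then ?w T' else 0) / ?D" .
  qed
  also have "\<dots> = (\<Sum>T'\<in>OT b (Suc n). if unord T' = U then ?w T' else 0) / ?D"
    by (simp add: OT_sum[OF n1] sum_divide_distrib)
  finally have "gp_law b p (Suc n) U = (\<Sum>T'\<in>OT b (Suc n). if unord T' = U then ?w T' else 0) / ?D / Tn \<phi> \<psi> b n" .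
  moreover have "Tn \<phi> \<psi> b (Suc n) = ?D * Tn \<phi> \<psi> b n" using Tn_Suc[OF n1] .
  ultimately show ?case by (simp add: rt_law_def n_def divide_divide_eq_left mult.commute)
qed

lemma laws_agree_gen:
  assumes "\<And>n c k. p n c k = q c k / (a * real n + \<beta>)"
  shows "laws_agree \<phi> \<psi> b p"
  unfolding laws_agree_def
proof (intro allI impI)
  fix n :: nat and U assume "1 \<le> n"
  then obtain k where "n = Suc k" by (cases n) auto
  then show "gp_law b p n U = rt_law \<phi> \<psi> b n U" using laws[OF assms] by simp
qed

lemma attraction_gen:
  assumes "\<And>n c k. p n c k = q c k / (a * real n + \<beta>)"
  shows "attraction_agrees \<phi> \<psi> b p"
  unfolding attraction_agrees_def using pT_eq assms by simp

end


lemma gchoose_prod_id: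
  fixes a \<beta> :: real
  assumes "a \<noteq> 0"
  shows "((-\<beta>/a) gchoose Suc n) * (-a)^(Suc n) = \<beta> * (\<Prod>j\<in>{1..n}. a * real j + \<beta>) / fact (Suc n)"
proof -
  have "((-\<beta>/a) gchoose Suc n) * (-a)^(Suc n) = (\<Prod>i=0..n. -\<beta>/a - real i) / fact (Suc n) * (\<Prod>i=0..n. -a)"
    by (simp add: gbinomial_Suc)
  also have "\<dots> = ((\<Prod>i=0..n. -\<beta>/a - real i) * (\<Prod>i=0..n. -a)) / fact (Suc n)"
    by (simp only: times_divide_eq_left)
  also have "(\<Prod>i=0..n. -\<beta>/a - real i) * (\<Prod>i=0..n. -a) = (\<Prod>i=0..n. (-\<beta>/a - real i) * (-a))"
    by (rule prod.distrib[symmetric])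
  also have "(\<Prod>i=0..n. (-\<beta>/a - real i) * (-a)) = (\<Prod>i=0..n. \<beta> + a * real i)"
    using assms by (intro prod.cong) (auto simp: field_simps)
  also have "{0..n} = insert 0 {1..n}" by auto
  also have "(\<Prod>i\<in>insert 0 {1..n}. \<beta> + a * real i) = \<beta> * (\<Prod>i\<in>{1..n}. a * real i + \<beta>)"
    by (subst prod.insert) (auto simp: add.commute)
  finally show ?thesis .
qed

lemma Tseries:
  fixes a \<beta> z :: real
  assumes "a > 0" "\<beta> \<noteq> 0" "\<bar>z\<bar> < 1 / a"
  shows "(\<lambda>n. (\<Prod>j\<in>{1..n}. a * real j + \<beta>) * z ^ Suc n / fact (Suc n)) sums (((1 - a * z) powr (-\<beta>/a) - 1) / \<beta>)"
proof -
  let ?c = "-\<beta>/a"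
  let ?f = "\<lambda>n. (?c gchoose n) * (-a * z)^n"
  have x: "\<bar>-a * z\<bar> < 1" using assms by (simp add: abs_mult field_simps)
  have s: "?f sums (1 + -a * z) powr ?c" by (rule gen_binomial_real[OF x])
  have "(\<lambda>n. ?f (Suc n)) sums ((1 + -a * z) powr ?c - 1)"
    using sums_Suc_iff[of ?f "(1 + -a * z) powr ?c - 1"] s by simp
  then have s2: "(\<lambda>n. ?f (Suc n) / \<beta>) sums (((1 + -a * z) powr ?c - 1) / \<beta>)" by (rule sums_divide)
  have eq: "?f (Suc n) / \<beta> = (\<Prod>j\<in>{1..n}. a * real j + \<beta>) * z ^ Suc n / fact (Suc n)" for n
  proof -
    have "?f (Suc n) = ((?c gchoose Suc n) * (-a)^(Suc n)) * z ^ Suc n"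
      by (simp only: power_mult_distrib mult.assoc)
    also have "\<dots> = \<beta> * (\<Prod>j\<in>{1..n}. a * real j + \<beta>) / fact (Suc n) * z ^ Suc n"
      using gchoose_prod_id[of a \<beta> n] assms(1) by simp
    finally show ?thesis using assms(2) by simp
  qed
  show ?thesis using s2 by (simp only: eq) simp
qed

lemma psi_rec:
  fixes A s :: real
  assumes "1 \<le> c"
  shows "fact c * A^c * ((real c + s) gchoose c) =
         fact (c-1) * A^(c-1) * ((real (c-1) + s) gchoose (c-1)) * (A * real c + A * s)"
proof -
  obtain c' where c: "c = Suc c'" using assms by (cases c) auto
  have ab: "real (Suc c') * ((real (Suc c') + s) gchoose Suc c') = (real (Suc c') + s) * ((real c' + s) gchoose c')"
    using gbinomial_absorption[of c' "real (Suc c') + s"] by (simp add: algebra_simps)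
  have "fact (Suc c') * A^(Suc c') * ((real (Suc c') + s) gchoose Suc c')
      = fact c' * A^(Suc c') * (real (Suc c') * ((real (Suc c') + s) gchoose Suc c'))"
    by (simp add: algebra_simps)
  also have "\<dots> = fact c' * A^(Suc c') * ((real (Suc c') + s) * ((real c' + s) gchoose c'))"
    by (simp only: ab)
  also have "\<dots> = fact c' * A^c' * ((real c' + s) gchoose c') * (A * real (Suc c') + A * s)"
    by (simp add: algebra_simps)
  finally show ?thesis using c by simp
qed

lemma psi_prod:
  fixes A s :: real
  shows "fact n * A^n * ((real n + s) gchoose n) = (\<Prod>j\<in>{1..n}. A * real j + A * s)"
proof (induction n)
  case 0 then show ?case by simp
next
  case (Suc n)
  have "fact (Suc n) * A^(Suc n) * ((real (Suc n) + s) gchoose (Suc n))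
      = fact n * A^n * ((real n + s) gchoose n) * (A * real (Suc n) + A * s)"
    using psi_rec[of "Suc n" A s] by simp
  then show ?case using Suc by (simp add: prod.cl_ivl_Suc)
qed

lemma rec_phi_series: "(\<lambda>k. rec_phi b k * t ^ k) sums (fact (b - 1) * exp (real b * t))"
proof -
  have "(\<lambda>k. (real b * t)^k /\<^sub>R fact k) sums exp (real b * t)" by (rule exp_converges)
  then have "(\<lambda>k. fact (b - 1) * ((real b * t)^k /\<^sub>R fact k)) sums (fact (b - 1) * exp (real b * t))"
    by (rule sums_mult)
  moreover have "rec_phi b k * t ^ k = fact (b - 1) * ((real b * t)^k /\<^sub>R fact k)" for k
    by (simp add: rec_phi_def power_mult_distrib divide_inverse)
  ultimately show ?thesis by simp
qed

lemma log_series: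
  fixes z :: real
  assumes "\<bar>z\<bar> < 1"
  shows "(\<lambda>n. fact n * z ^ Suc n / fact (Suc n)) sums ln (1 / (1 - z))"
proof -
  have "\<bar>-z\<bar> < 1" using assms by simp
  from ln_series'[OF this] have "(\<lambda>n. - (z^n) / of_nat n) sums ln (1 - z)" by simp
  then have "(\<lambda>n. - (- (z^n) / of_nat n)) sums (- ln (1 - z))" by (rule sums_minus)
  then have s: "(\<lambda>n. z^n / of_nat n) sums (- ln (1 - z))" by simp
  have "(\<lambda>n. z^(Suc n) / of_nat (Suc n)) sums (- ln (1 - z))"
    using sums_Suc_iff[of "\<lambda>n. z^n / of_nat n" "- ln (1 - z)"] s by simp
  moreover have "fact n * z ^ Suc n / fact (Suc n) = z^(Suc n) / of_nat (Suc n)" for n :: nat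
  proof -
    have f: "(fact (Suc n) :: real) = of_nat (Suc n) * fact n" by (rule fact_Suc)
    have nz: "(fact n :: real) \<noteq> 0" by simp
    show ?thesis unfolding f mult.commute[of "fact n" "z ^ Suc n"] by (rule nonzero_mult_divide_mult_cancel_right[OF nz])
  qed
  moreover have "- ln (1 - z) = ln (1 / (1 - z))" using assms by (simp add: ln_div)
  ultimately show ?thesis by simp
qed

lemma dary_phi_series:
  fixes t :: real
  shows "(\<lambda>k. dary_phi b d k * t ^ k) sums
          (fact (b - 1) * (real d - 1) ^ (b - 1)
            * ((real (b - 1) + 1 / (real d - 1)) gchoose (b - 1)) * (1 + t) ^ (b * (d - 1) + 1))"
proof -
  let ?K = "fact (b - 1) * (real d - 1) ^ (b - 1) * ((real (b - 1) + 1 / (real d - 1)) gchoose (b - 1))"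
  let ?M = "b * (d - 1) + 1"
  have "(\<lambda>k. dary_phi b d k * t ^ k) sums (\<Sum>k\<in>{..?M}. dary_phi b d k * t ^ k)"
    by (rule sums_finite) (auto simp: dary_phi_def)
  moreover have "(\<Sum>k\<in>{..?M}. dary_phi b d k * t ^ k) = ?K * (\<Sum>k\<le>?M. of_nat (?M choose k) * t^k * 1^(?M-k))"
    unfolding dary_phi_def sum_distrib_left by (rule sum.cong) (simp_all add: mult_ac)
  moreover have "(\<Sum>k\<le>?M. of_nat (?M choose k) * t^k * 1^(?M-k)) = (t + 1) ^ ?M"
    by (rule binomial_ring[symmetric])
  ultimately show ?thesis by (simp add: add.commute)
qed

lemma porr_phi_series:
  fixes t \<alpha> :: real
  assumes "\<alpha> > 0" "\<bar>t\<bar> < 1"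
  shows "(\<lambda>k. porr_phi b \<alpha> k * t ^ k) sums
          (fact (b - 1) * (\<alpha> + 1) ^ (b - 1) * ((real (b - 1) - 1 / (\<alpha> + 1)) gchoose (b - 1))
            / (1 - t) powr ((\<alpha> + 1) * real b - 1))"
proof -
  let ?K = "fact (b - 1) * (\<alpha> + 1) ^ (b - 1) * ((real (b - 1) - 1 / (\<alpha> + 1)) gchoose (b - 1))"
  let ?e = "(\<alpha> + 1) * real b - 1"
  have x: "\<bar>-t\<bar> < 1" using assms by simp
  have s: "(\<lambda>k. ((-?e) gchoose k) * (-t)^k) sums (1 + -t) powr (-?e)" by (rule gen_binomial_real[OF x])
  have eq: "((-?e) gchoose k) * (-t)^k = (((\<alpha> + 1) * real b - 2 + real k) gchoose k) * t^k" for k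
  proof -
    have "((-?e) gchoose k) = (-1)^k * ((real k - (-?e) - 1) gchoose k)" by (rule gbinomial_negated_upper)
    also have "real k - (-?e) - 1 = (\<alpha> + 1) * real b - 2 + real k" by simp
    finally have g1: "((-?e) gchoose k) = (-1)^k * (((\<alpha> + 1) * real b - 2 + real k) gchoose k)" .
    have g2: "(-t)^k = (-1)^k * t^k" by (rule power_minus)
    have m1: "(-1::real)^k * (-1)^k = 1" by (induction k) auto
    have "((-?e) gchoose k) * (-t)^k = ((-1)^k * (((\<alpha> + 1) * real b - 2 + real k) gchoose k)) * ((-1)^k * t^k)"
      by (simp only: g1 g2)
    also have "\<dots> = ((-1)^k * (-1)^k) * ((((\<alpha> + 1) * real b - 2 + real k) gchoose k) * t^k)"
      by (simp add: mult_ac)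
    also have "\<dots> = (((\<alpha> + 1) * real b - 2 + real k) gchoose k) * t^k"
      by (simp only: m1 mult_1_left)
    finally show ?thesis .
  qed
  have "(\<lambda>k. (((\<alpha> + 1) * real b - 2 + real k) gchoose k) * t^k) sums (1 - t) powr (-?e)"
    using s by (simp only: eq) simp
  then have "(\<lambda>k. ?K * ((((\<alpha> + 1) * real b - 2 + real k) gchoose k) * t^k)) sums (?K * (1 - t) powr (-?e))"
    by (rule sums_mult)
  moreover have "?K * (1 - t) powr (-?e) = ?K / (1 - t) powr ?e"
    by (simp only: powr_minus divide_inverse)
  ultimately show ?thesis by (simp add: porr_phi_def mult_ac)
qed


lemma choose_rec_real:
  "real (Suc k) * real (N choose Suc k) = real (N choose k) * (real N - real k)"
proof (cases "k \<le> N")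
  case True
  have nat: "Suc k * (N choose Suc k) = (N - k) * (N choose k)"
  proof (cases N)
    case 0 then show ?thesis by simp
  next
    case (Suc n)
    have "Suc k * (N choose Suc k) = N * ((N - 1) choose k)" using Suc_times_binomial[of k n] Suc by simp
    also have "\<dots> = (N - k) * (N choose k)" by (rule binomial_absorb_comp[symmetric])
    finally show ?thesis .
  qed
  have "real (Suc k) * real (N choose Suc k) = real (Suc k * (N choose Suc k))" by (simp only: of_nat_mult)
  also have "\<dots> = real ((N - k) * (N choose k))" by (simp only: nat)
  also have "\<dots> = real (N choose k) * (real N - real k)" using True by (simp add: of_nat_diff)
  finally show ?thesis .
next
  case False
  then have "N < k" by simp
  then have z: "N choose k = 0" "N choose Suc k = 0" by (auto intro: binomial_eq_0)
  show ?thesis by (simp only: z of_nat_0 mult_zero_left mult_zero_right)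
qed

lemma prod_real_fact: "(\<Prod>j\<in>{1..n}. 1 * real j + 0) = fact n"
  by (induction n) (simp_all add: prod.cl_ivl_Suc)

lemma rec_nw1: "1 \<le> b \<Longrightarrow> nw (rec_phi b) rec_psi b 1 0 = 1"
  by (simp add: nw_def rec_phi_def rec_psi_def)

lemma rec_model: "1 \<le> b \<Longrightarrow> bmodel (rec_phi b) rec_psi b 1 0"
proof (unfold_locales)
  assume b: "1 \<le> b"
  show "1 \<le> b" by (rule b)
  show "nw (rec_phi b) rec_psi b 1 0 = 1" using rec_nw1[OF b] .
  fix c :: nat assume c: "1 \<le> c" "c < b"
  obtain c' where c': "c = Suc c'" using c by (cases c) auto
  have "nw (rec_phi b) rec_psi b (Suc c) 0 = fact c"
    using c by (auto simp: nw_def rec_phi_def rec_psi_def)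
  moreover have "nw (rec_phi b) rec_psi b c 0 = fact (c - 1)" using c by (simp add: nw_def rec_psi_def)
  ultimately show "nw (rec_phi b) rec_psi b (Suc c) 0 = nw (rec_phi b) rec_psi b c 0 * (1 * real c + 0)"
    using c' by simp
next
  assume b: "1 \<le> b"
  fix k :: nat
  have f: "(fact (Suc k)::real) = real (Suc k) * fact k" by (rule fact_Suc)
  have "real (Suc k) * rec_phi b (Suc k) = real (Suc k) * (fact (b - 1) * real b ^ Suc k) / (real (Suc k) * fact k)"
    unfolding rec_phi_def f by (simp only: times_divide_eq_right)
  also have "\<dots> = fact (b - 1) * real b ^ Suc k / fact k"
    by (rule nonzero_mult_divide_mult_cancel_left) simp
  also have "\<dots> = rec_phi b k * real b" by (simp add: rec_phi_def mult_ac)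
  finally have "real (Suc k) * rec_phi b (Suc k) = rec_phi b k * real b" .
  then show "real (Suc k) * rec_phi b (Suc k) * nw (rec_phi b) rec_psi b 1 0 = rec_phi b k * (1 * real b + 0 * (1 - real k))"
    using rec_nw1[OF b] by simp
next
  fix n :: nat assume "1 \<le> n" then show "0 < 1 * real n + 0" by simp
qed

lemma dary_psi_Suc:
  assumes "d \<ge> 2" "1 \<le> c"
  shows "dary_psi d (Suc c) = dary_psi d c * ((real d - 1) * real c + 1)"
proof -
  have e: "(real d - 1) * (1 / (real d - 1)) = 1" using assms by simp
  show ?thesis using psi_rec[OF assms(2), of "real d - 1" "1 / (real d - 1)"] e
    by (simp add: dary_psi_def)
qed

lemma dary_nw:
  assumes "1 \<le> c" "c \<le> b"
  shows "nw (dary_phi b d) (dary_psi d) b c 0 = dary_psi d c"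
  using assms by (auto simp: nw_def dary_phi_def dary_psi_def)

lemma dary_model:
  assumes b: "1 \<le> b" and d: "d \<ge> 2"
  shows "bmodel (dary_phi b d) (dary_psi d) b (real d - 1) 1"
proof (unfold_locales)
  show "1 \<le> b" by (rule b)
  have n1: "nw (dary_phi b d) (dary_psi d) b 1 0 = 1" using dary_nw[of 1 b d] b by (simp add: dary_psi_def)
  then show "nw (dary_phi b d) (dary_psi d) b 1 0 = 1" .
  fix c :: nat assume c: "1 \<le> c" "c < b"
  show "nw (dary_phi b d) (dary_psi d) b (Suc c) 0 = nw (dary_phi b d) (dary_psi d) b c 0 * ((real d - 1) * real c + 1)"
    using dary_nw[of "Suc c" b d] dary_nw[of c b d] c dary_psi_Suc[OF d c(1)] by simp
next
  fix k :: nat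
  let ?N = "b * (d - 1) + 1"
  have rN: "real ?N = (real d - 1) * real b + 1" using d by (simp add: of_nat_diff algebra_simps)
  let ?K = "fact (b - 1) * (real d - 1) ^ (b - 1) * ((real (b - 1) + 1 / (real d - 1)) gchoose (b - 1))"
  have "real (Suc k) * dary_phi b d (Suc k) = ?K * (real (Suc k) * real (?N choose Suc k))"
    by (simp add: dary_phi_def mult_ac)
  also have "\<dots> = ?K * (real (?N choose k) * (real ?N - real k))" by (simp only: choose_rec_real)
  also have "\<dots> = dary_phi b d k * (real ?N - real k)" by (simp add: dary_phi_def mult_ac)
  finally have st: "real (Suc k) * dary_phi b d (Suc k) = dary_phi b d k * (real ?N - real k)" .
  have e2: "real ?N - real k = (real d - 1) * real b + 1 * (1 - real k)" by (subst rN) simp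
  have n1: "nw (dary_phi b d) (dary_psi d) b 1 0 = 1" using dary_nw[of 1 b d] b by (simp add: dary_psi_def)
  show "real (Suc k) * dary_phi b d (Suc k) * nw (dary_phi b d) (dary_psi d) b 1 0 =
    dary_phi b d k * ((real d - 1) * real b + 1 * (1 - real k))"
    by (simp only: n1 mult_1_right st e2)
next
  fix n :: nat assume "1 \<le> n"
  then show "0 < (real d - 1) * real n + 1" using d by (simp add: add_pos_nonneg)
qed

lemma dary_psi_prod:
  assumes "d \<ge> 2"
  shows "dary_psi d (Suc n) = (\<Prod>j\<in>{1..n}. (real d - 1) * real j + 1)"
proof -
  have e: "(real d - 1) * (1 / (real d - 1)) = 1" using assms by simp
  show ?thesis using psi_prod[of n "real d - 1" "1 / (real d - 1)"] e by (simp add: dary_psi_def)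
qed

lemma porr_psi_Suc:
  assumes "\<alpha> > 0" "1 \<le> c"
  shows "porr_psi \<alpha> (Suc c) = porr_psi \<alpha> c * ((\<alpha> + 1) * real c + (-1))"
proof -
  have e: "(\<alpha> + 1) * (- (1 / (\<alpha> + 1))) = -1" using assms by (simp add: field_simps)
  show ?thesis using psi_rec[OF assms(2), of "\<alpha> + 1" "- (1 / (\<alpha> + 1))"] e
    by (simp add: porr_psi_def)
qed

lemma porr_nw:
  assumes "1 \<le> c" "c \<le> b"
  shows "nw (porr_phi b \<alpha>) (porr_psi \<alpha>) b c 0 = porr_psi \<alpha> c"
  using assms by (auto simp: nw_def porr_phi_def porr_psi_def)

lemma porr_model:
  assumes b: "1 \<le> b" and al: "\<alpha> > 0"
  shows "bmodel (porr_phi b \<alpha>) (porr_psi \<alpha>) b (\<alpha> + 1) (-1)"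
proof (unfold_locales)
  show "1 \<le> b" by (rule b)
  have n1: "nw (porr_phi b \<alpha>) (porr_psi \<alpha>) b 1 0 = 1" using porr_nw[of 1 b \<alpha>] b by (simp add: porr_psi_def)
  then show "nw (porr_phi b \<alpha>) (porr_psi \<alpha>) b 1 0 = 1" .
  fix c :: nat assume c: "1 \<le> c" "c < b"
  show "nw (porr_phi b \<alpha>) (porr_psi \<alpha>) b (Suc c) 0 = nw (porr_phi b \<alpha>) (porr_psi \<alpha>) b c 0 * ((\<alpha> + 1) * real c + - 1)"
    using porr_nw[of "Suc c" b \<alpha>] porr_nw[of c b \<alpha>] c porr_psi_Suc[OF al c(1)] by simp
next
  fix k :: nat
  let ?x = "(\<alpha> + 1) * real b - 2 + real (Suc k)"
  have ab: "real (Suc k) * (?x gchoose Suc k) = ?x * ((?x - 1) gchoose k)" by (rule gbinomial_absorption)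
  have x1: "?x - 1 = (\<alpha> + 1) * real b - 2 + real k" by simp
  let ?K = "fact (b - 1) * (\<alpha> + 1) ^ (b - 1) * ((real (b - 1) - 1 / (\<alpha> + 1)) gchoose (b - 1))"
  have "real (Suc k) * porr_phi b \<alpha> (Suc k) = ?K * (real (Suc k) * (?x gchoose Suc k))"
    by (simp add: porr_phi_def mult_ac)
  also have "\<dots> = ?K * (?x * ((?x - 1) gchoose k))" by (simp only: ab)
  also have "\<dots> = porr_phi b \<alpha> k * ?x" by (simp only: x1) (simp add: porr_phi_def mult_ac)
  finally have st: "real (Suc k) * porr_phi b \<alpha> (Suc k) = porr_phi b \<alpha> k * ?x" .
  have e2: "?x = (\<alpha> + 1) * real b + - 1 * (1 - real k)" by simp
  have n1: "nw (porr_phi b \<alpha>) (porr_psi \<alpha>) b 1 0 = 1" using porr_nw[of 1 b \<alpha>] b by (simp add: porr_psi_def)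
  show "real (Suc k) * porr_phi b \<alpha> (Suc k) * nw (porr_phi b \<alpha>) (porr_psi \<alpha>) b 1 0 =
    porr_phi b \<alpha> k * ((\<alpha> + 1) * real b + - 1 * (1 - real k))"
    by (simp only: n1 mult_1_right st e2)
next
  fix n :: nat assume n: "1 \<le> n"
  have "(1::real) < \<alpha> + 1" using al by simp
  also have "\<alpha> + 1 \<le> (\<alpha> + 1) * real n" using n al by simp
  finally have h: "1 < (\<alpha> + 1) * real n" .
  then show "0 < (\<alpha> + 1) * real n + - 1" by simp
qed

lemma porr_psi_prod:
  assumes "\<alpha> > 0"
  shows "porr_psi \<alpha> (Suc n) = (\<Prod>j\<in>{1..n}. (\<alpha> + 1) * real j + (-1))"
proof -
  have e: "(\<alpha> + 1) * (- (1 / (\<alpha> + 1))) = -1" using assms by (simp add: field_simps)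
  show ?thesis using psi_prod[of n "\<alpha> + 1" "- (1 / (\<alpha> + 1))"] e by (simp add: porr_psi_def)
qed


theorem mainTheorem1:
  fixes b :: nat
  assumes b: "b \<ge> 1"
  shows
    \<comment> \<open>1. bucket recursive trees\<close>
    "(attraction_agrees (rec_phi b) rec_psi b rec_p
      \<and> laws_agree (rec_phi b) rec_psi b rec_p
      \<and> (\<forall>t::real. (\<lambda>k. rec_phi b k * t ^ k) sums (fact (b - 1) * exp (real b * t)))
      \<and> (\<forall>z::real. \<bar>z\<bar> < 1 \<longrightarrow>
           (\<lambda>n. Tn (rec_phi b) rec_psi b (Suc n) * z ^ Suc n / fact (Suc n))
             sums ln (1 / (1 - z)))
      \<and> (\<forall>n\<ge>1. Tn (rec_phi b) rec_psi b n = fact (n - 1)))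
   \<and>
    \<comment> \<open>2. (b,d)-ary increasing trees\<close>
    (\<forall>d::nat. d \<ge> 2 \<longrightarrow>
       attraction_agrees (dary_phi b d) (dary_psi d) b (dary_p d)
     \<and> laws_agree (dary_phi b d) (dary_psi d) b (dary_p d)
     \<and> (\<forall>t::real. (\<lambda>k. dary_phi b d k * t ^ k) sums
          (fact (b - 1) * (real d - 1) ^ (b - 1)
            * ((real (b - 1) + 1 / (real d - 1)) gchoose (b - 1)) * (1 + t) ^ (b * (d - 1) + 1)))
     \<and> (\<forall>z::real. \<bar>z\<bar> < 1 / (real d - 1) \<longrightarrow>
          (\<lambda>n. Tn (dary_phi b d) (dary_psi d) b (Suc n) * z ^ Suc n / fact (Suc n))
            sums ((1 - (real d - 1) * z) powr (- 1 / (real d - 1)) - 1))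
     \<and> (\<forall>n\<ge>1. Tn (dary_phi b d) (dary_psi d) b n =
          fact (n - 1) * (real d - 1) ^ (n - 1) * ((real (n - 1) + 1 / (real d - 1)) gchoose (n - 1))))
   \<and>
    \<comment> \<open>3. (b,alpha)-plane oriented recursive trees\<close>
    (\<forall>\<alpha>::real. \<alpha> > 0 \<longrightarrow>
       attraction_agrees (porr_phi b \<alpha>) (porr_psi \<alpha>) b (porr_p \<alpha>)
     \<and> laws_agree (porr_phi b \<alpha>) (porr_psi \<alpha>) b (porr_p \<alpha>)
     \<and> (\<forall>t::real. \<bar>t\<bar> < 1 \<longrightarrow> (\<lambda>k. porr_phi b \<alpha> k * t ^ k) sums
          (fact (b - 1) * (\<alpha> + 1) ^ (b - 1) * ((real (b - 1) - 1 / (\<alpha> + 1)) gchoose (b - 1))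
            / (1 - t) powr ((\<alpha> + 1) * real b - 1)))
     \<and> (\<forall>z::real. \<bar>z\<bar> < 1 / (\<alpha> + 1) \<longrightarrow>
          (\<lambda>n. Tn (porr_phi b \<alpha>) (porr_psi \<alpha>) b (Suc n) * z ^ Suc n / fact (Suc n))
            sums (1 - (1 - (\<alpha> + 1) * z) powr (1 / (\<alpha> + 1))))
     \<and> (\<forall>n\<ge>1. Tn (porr_phi b \<alpha>) (porr_psi \<alpha>) b n =
          fact (n - 1) * (\<alpha> + 1) ^ (n - 1) * ((real (n - 1) - 1 / (\<alpha> + 1)) gchoose (n - 1))))"
proof -
  have R: "attraction_agrees (rec_phi b) rec_psi b rec_p
      \<and> laws_agree (rec_phi b) rec_psi b rec_p
      \<and> (\<forall>t::real. (\<lambda>k. rec_phi b k * t ^ k) sums (fact (b - 1) * exp (real b * t)))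
      \<and> (\<forall>z::real. \<bar>z\<bar> < 1 \<longrightarrow>
           (\<lambda>n. Tn (rec_phi b) rec_psi b (Suc n) * z ^ Suc n / fact (Suc n))
             sums ln (1 / (1 - z)))
      \<and> (\<forall>n\<ge>1. Tn (rec_phi b) rec_psi b n = fact (n - 1))"
  proof -
    interpret M: bmodel "rec_phi b" rec_psi b 1 0 by (rule rec_model[OF b])
    have peq: "\<And>n c k. rec_p n c k = M.q c k / (1 * real n + 0)" by (simp add: rec_p_def M.q_def)
    have TnS: "\<And>n. Tn (rec_phi b) rec_psi b (Suc n) = fact n" using M.Tn_prod prod_real_fact by simp
    have A1: "attraction_agrees (rec_phi b) rec_psi b rec_p" by (rule M.attraction_gen[OF peq])
    have A2: "laws_agree (rec_phi b) rec_psi b rec_p" by (rule M.laws_agree_gen[OF peq])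
    have A3: "\<forall>t::real. (\<lambda>k. rec_phi b k * t ^ k) sums (fact (b - 1) * exp (real b * t))"
      using rec_phi_series by blast
    have A4: "\<forall>z::real. \<bar>z\<bar> < 1 \<longrightarrow>
           (\<lambda>n. Tn (rec_phi b) rec_psi b (Suc n) * z ^ Suc n / fact (Suc n)) sums ln (1 / (1 - z))"
      using log_series by (simp add: TnS)
    have A5: "\<forall>n\<ge>1. Tn (rec_phi b) rec_psi b n = fact (n - 1)"
    proof (intro allI impI)
      fix n :: nat assume "1 \<le> n"
      then obtain m where "n = Suc m" by (cases n) auto
      then show "Tn (rec_phi b) rec_psi b n = fact (n - 1)" using TnS by simp
    qed
    show ?thesis using A1 A2 A3 A4 A5 by blast
  qed
  have D: "\<forall>d::nat. d \<ge> 2 \<longrightarrow>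
       attraction_agrees (dary_phi b d) (dary_psi d) b (dary_p d)
     \<and> laws_agree (dary_phi b d) (dary_psi d) b (dary_p d)
     \<and> (\<forall>t::real. (\<lambda>k. dary_phi b d k * t ^ k) sums
          (fact (b - 1) * (real d - 1) ^ (b - 1)
            * ((real (b - 1) + 1 / (real d - 1)) gchoose (b - 1)) * (1 + t) ^ (b * (d - 1) + 1)))
     \<and> (\<forall>z::real. \<bar>z\<bar> < 1 / (real d - 1) \<longrightarrow>
          (\<lambda>n. Tn (dary_phi b d) (dary_psi d) b (Suc n) * z ^ Suc n / fact (Suc n))
            sums ((1 - (real d - 1) * z) powr (- 1 / (real d - 1)) - 1))
     \<and> (\<forall>n\<ge>1. Tn (dary_phi b d) (dary_psi d) b n =
          fact (n - 1) * (real d - 1) ^ (n - 1) * ((real (n - 1) + 1 / (real d - 1)) gchoose (n - 1)))"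
  proof (intro allI impI)
    fix d :: nat assume d: "d \<ge> 2"
    interpret M: bmodel "dary_phi b d" "dary_psi d" b "real d - 1" 1 by (rule dary_model[OF b d])
    have peq: "\<And>n c k. dary_p d n c k = M.q c k / ((real d - 1) * real n + 1)"
      unfolding dary_p_def M.q_def by (simp add: algebra_simps)
    have A1: "attraction_agrees (dary_phi b d) (dary_psi d) b (dary_p d)" by (rule M.attraction_gen[OF peq])
    have A2: "laws_agree (dary_phi b d) (dary_psi d) b (dary_p d)" by (rule M.laws_agree_gen[OF peq])
    have A3: "\<forall>t::real. (\<lambda>k. dary_phi b d k * t ^ k) sums
          (fact (b - 1) * (real d - 1) ^ (b - 1)
            * ((real (b - 1) + 1 / (real d - 1)) gchoose (b - 1)) * (1 + t) ^ (b * (d - 1) + 1))"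
      using dary_phi_series by blast
    have A4: "\<forall>z::real. \<bar>z\<bar> < 1 / (real d - 1) \<longrightarrow>
          (\<lambda>n. Tn (dary_phi b d) (dary_psi d) b (Suc n) * z ^ Suc n / fact (Suc n))
            sums ((1 - (real d - 1) * z) powr (- 1 / (real d - 1)) - 1)"
    proof (intro allI impI)
      fix z :: real assume z: "\<bar>z\<bar> < 1 / (real d - 1)"
      have a0: "real d - 1 > 0" using d by simp
      have s: "(\<lambda>n. (\<Prod>j\<in>{1..n}. (real d - 1) * real j + 1) * z ^ Suc n / fact (Suc n)) sums
                (((1 - (real d - 1) * z) powr (- 1 / (real d - 1)) - 1) / 1)"
        by (rule Tseries[OF a0 _ z]) simp
      then show "(\<lambda>n. Tn (dary_phi b d) (dary_psi d) b (Suc n) * z ^ Suc n / fact (Suc n))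
            sums ((1 - (real d - 1) * z) powr (- 1 / (real d - 1)) - 1)"
        by (simp only: M.Tn_prod div_by_1)
    qed
    have A5: "\<forall>n\<ge>1. Tn (dary_phi b d) (dary_psi d) b n =
          fact (n - 1) * (real d - 1) ^ (n - 1) * ((real (n - 1) + 1 / (real d - 1)) gchoose (n - 1))"
    proof (intro allI impI)
      fix n :: nat assume "1 \<le> n"
      then obtain m where m: "n = Suc m" by (cases n) auto
      have "Tn (dary_phi b d) (dary_psi d) b (Suc m) = dary_psi d (Suc m)"
        using M.Tn_prod dary_psi_prod[OF d] by simp
      then show "Tn (dary_phi b d) (dary_psi d) b n =
          fact (n - 1) * (real d - 1) ^ (n - 1) * ((real (n - 1) + 1 / (real d - 1)) gchoose (n - 1))"
        using m by (simp add: dary_psi_def)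
    qed
    show "attraction_agrees (dary_phi b d) (dary_psi d) b (dary_p d)
     \<and> laws_agree (dary_phi b d) (dary_psi d) b (dary_p d)
     \<and> (\<forall>t::real. (\<lambda>k. dary_phi b d k * t ^ k) sums
          (fact (b - 1) * (real d - 1) ^ (b - 1)
            * ((real (b - 1) + 1 / (real d - 1)) gchoose (b - 1)) * (1 + t) ^ (b * (d - 1) + 1)))
     \<and> (\<forall>z::real. \<bar>z\<bar> < 1 / (real d - 1) \<longrightarrow>
          (\<lambda>n. Tn (dary_phi b d) (dary_psi d) b (Suc n) * z ^ Suc n / fact (Suc n))
            sums ((1 - (real d - 1) * z) powr (- 1 / (real d - 1)) - 1))
     \<and> (\<forall>n\<ge>1. Tn (dary_phi b d) (dary_psi d) b n =
          fact (n - 1) * (real d - 1) ^ (n - 1) * ((real (n - 1) + 1 / (real d - 1)) gchoose (n - 1)))"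
      using A1 A2 A3 A4 A5 by blast
  qed
  have P: "\<forall>\<alpha>::real. \<alpha> > 0 \<longrightarrow>
       attraction_agrees (porr_phi b \<alpha>) (porr_psi \<alpha>) b (porr_p \<alpha>)
     \<and> laws_agree (porr_phi b \<alpha>) (porr_psi \<alpha>) b (porr_p \<alpha>)
     \<and> (\<forall>t::real. \<bar>t\<bar> < 1 \<longrightarrow> (\<lambda>k. porr_phi b \<alpha> k * t ^ k) sums
          (fact (b - 1) * (\<alpha> + 1) ^ (b - 1) * ((real (b - 1) - 1 / (\<alpha> + 1)) gchoose (b - 1))
            / (1 - t) powr ((\<alpha> + 1) * real b - 1)))
     \<and> (\<forall>z::real. \<bar>z\<bar> < 1 / (\<alpha> + 1) \<longrightarrow>
          (\<lambda>n. Tn (porr_phi b \<alpha>) (porr_psi \<alpha>) b (Suc n) * z ^ Suc n / fact (Suc n))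
            sums (1 - (1 - (\<alpha> + 1) * z) powr (1 / (\<alpha> + 1))))
     \<and> (\<forall>n\<ge>1. Tn (porr_phi b \<alpha>) (porr_psi \<alpha>) b n =
          fact (n - 1) * (\<alpha> + 1) ^ (n - 1) * ((real (n - 1) - 1 / (\<alpha> + 1)) gchoose (n - 1)))"
  proof (intro allI impI)
    fix \<alpha> :: real assume al: "\<alpha> > 0"
    interpret M: bmodel "porr_phi b \<alpha>" "porr_psi \<alpha>" b "\<alpha> + 1" "-1" by (rule porr_model[OF b al])
    have peq: "\<And>n c k. porr_p \<alpha> n c k = M.q c k / ((\<alpha> + 1) * real n + -1)"
      unfolding porr_p_def M.q_def by (simp add: algebra_simps)
    have A1: "attraction_agrees (porr_phi b \<alpha>) (porr_psi \<alpha>) b (porr_p \<alpha>)" by (rule M.attraction_gen[OF peq])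
    have A2: "laws_agree (porr_phi b \<alpha>) (porr_psi \<alpha>) b (porr_p \<alpha>)" by (rule M.laws_agree_gen[OF peq])
    have A3: "\<forall>t::real. \<bar>t\<bar> < 1 \<longrightarrow> (\<lambda>k. porr_phi b \<alpha> k * t ^ k) sums
          (fact (b - 1) * (\<alpha> + 1) ^ (b - 1) * ((real (b - 1) - 1 / (\<alpha> + 1)) gchoose (b - 1))
            / (1 - t) powr ((\<alpha> + 1) * real b - 1))"
      using porr_phi_series[OF al] by blast
    have A4: "\<forall>z::real. \<bar>z\<bar> < 1 / (\<alpha> + 1) \<longrightarrow>
          (\<lambda>n. Tn (porr_phi b \<alpha>) (porr_psi \<alpha>) b (Suc n) * z ^ Suc n / fact (Suc n))
            sums (1 - (1 - (\<alpha> + 1) * z) powr (1 / (\<alpha> + 1)))"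
    proof (intro allI impI)
      fix z :: real assume z: "\<bar>z\<bar> < 1 / (\<alpha> + 1)"
      have a0: "\<alpha> + 1 > 0" using al by simp
      have s: "(\<lambda>n. (\<Prod>j\<in>{1..n}. (\<alpha> + 1) * real j + -1) * z ^ Suc n / fact (Suc n)) sums
                (((1 - (\<alpha> + 1) * z) powr (- (-1) / (\<alpha> + 1)) - 1) / (-1))"
        by (rule Tseries[OF a0 _ z]) simp
      have v: "((1 - (\<alpha> + 1) * z) powr (- (-1) / (\<alpha> + 1)) - 1) / (-1) = 1 - (1 - (\<alpha> + 1) * z) powr (1 / (\<alpha> + 1))"
        by simp
      show "(\<lambda>n. Tn (porr_phi b \<alpha>) (porr_psi \<alpha>) b (Suc n) * z ^ Suc n / fact (Suc n))
            sums (1 - (1 - (\<alpha> + 1) * z) powr (1 / (\<alpha> + 1)))"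
        using s unfolding v by (simp only: M.Tn_prod)
    qed
    have A5: "\<forall>n\<ge>1. Tn (porr_phi b \<alpha>) (porr_psi \<alpha>) b n =
          fact (n - 1) * (\<alpha> + 1) ^ (n - 1) * ((real (n - 1) - 1 / (\<alpha> + 1)) gchoose (n - 1))"
    proof (intro allI impI)
      fix n :: nat assume "1 \<le> n"
      then obtain m where m: "n = Suc m" by (cases n) auto
      have "Tn (porr_phi b \<alpha>) (porr_psi \<alpha>) b (Suc m) = porr_psi \<alpha> (Suc m)"
        using M.Tn_prod porr_psi_prod[OF al] by simp
      then show "Tn (porr_phi b \<alpha>) (porr_psi \<alpha>) b n =
          fact (n - 1) * (\<alpha> + 1) ^ (n - 1) * ((real (n - 1) - 1 / (\<alpha> + 1)) gchoose (n - 1))"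
        using m by (simp add: porr_psi_def)
    qed
    show "attraction_agrees (porr_phi b \<alpha>) (porr_psi \<alpha>) b (porr_p \<alpha>)
     \<and> laws_agree (porr_phi b \<alpha>) (porr_psi \<alpha>) b (porr_p \<alpha>)
     \<and> (\<forall>t::real. \<bar>t\<bar> < 1 \<longrightarrow> (\<lambda>k. porr_phi b \<alpha> k * t ^ k) sums
          (fact (b - 1) * (\<alpha> + 1) ^ (b - 1) * ((real (b - 1) - 1 / (\<alpha> + 1)) gchoose (b - 1))
            / (1 - t) powr ((\<alpha> + 1) * real b - 1)))
     \<and> (\<forall>z::real. \<bar>z\<bar> < 1 / (\<alpha> + 1) \<longrightarrow>
          (\<lambda>n. Tn (porr_phi b \<alpha>) (porr_psi \<alpha>) b (Suc n) * z ^ Suc n / fact (Suc n))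
            sums (1 - (1 - (\<alpha> + 1) * z) powr (1 / (\<alpha> + 1))))
     \<and> (\<forall>n\<ge>1. Tn (porr_phi b \<alpha>) (porr_psi \<alpha>) b n =
          fact (n - 1) * (\<alpha> + 1) ^ (n - 1) * ((real (n - 1) - 1 / (\<alpha> + 1)) gchoose (n - 1)))"
      using A1 A2 A3 A4 A5 by blast
  qed
  show ?thesis using R D P by blast
qed


end
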